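(* (1) For any $r\ge0$ and odd primes $p_1,\ldots,p_r$ (not necessarily distinct), \[ \sum_{n=0}^{\infty}b_4\!\left(\prod_{s=1}^{r}p_s^2\,n+\frac{\prod_{s=1}^{r}p_s^2-1}{8}\right)q^n \equiv \psi(q) \pmod 2, \] where $\prod_{s=1}^{0}p_s^2=1$. (2) For any $r\ge1$, odd primes $p_1,\ldots,p_r$ and $n\ge0$, \[ b_4\!\left(\prod_{s=1}^{r}p_s^2\, n+\frac{(8i+p_{r})\prod_{s=1}^{r-1}p_s^2\,p_{r}-1}{8}\right)\equiv 0 \pmod 2 \] for each $i=1,2,\ldots,p_r-1$. (3) For any $r\ge1$, odd primes $p_1,\ldots,p_r$ and $n\ge0$, \[ b_4\!\left(\prod_{s=1}^{r-1}p_s^2\,p_{r}\, n+\frac{(8j+1)\prod_{s=1}^{r-1}p_s^2-1}{8}\right)\equiv 0 \pmod 2 \] for every integer $j$ with $0\le j\le p_r-1$ and $\left(\frac{8j+1}{p_r}\right)=-1$.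
   Context: For a positive integer $\ell$, $b_\ell(n)$ denotes the number of partitions of $n$ having no part divisible by $\ell$. $\psi(q)=\sum_{n\ge0}q^{n(n+1)/2}$. A congruence between power series modulo $2$ means coefficientwise congruence. $\left(\frac{a}{p}\right)$ is the Legendre symbol. *)

theory Defs
  imports "HOL-Library.Multiset" "HOL-Number_Theory.Number_Theory"
begin

definition b :: "nat \<Rightarrow> nat \<Rightarrow> nat" where
  "b l n = card {M :: nat multiset. (\<forall>x\<in>#M. 0 < x \<and> \<not> l dvd x) \<and> sum_mset M = n}"

text \<open>Coefficient of q^n in psi(q) = sum_{k>=0} q^(k(k+1)/2).\<close>
definition psi_coeff :: "nat \<Rightarrow> nat" where
  "psi_coeff n = card {k :: nat. k * (k + 1) div 2 = n}"

end

theory Submission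
  imports Defs "HOL-Library.Z2" "HOL-Computational_Algebra.Formal_Power_Series" "HOL-Library.Multiset" "HOL-Number_Theory.Number_Theory"
begin


unbundle fps_syntax


lemma bit_add_self [simp]: "(x::bit) + x = 0"
  by (cases x) auto

lemma of_nat_bit: "(of_nat n :: bit) = (if even n then 0 else 1)"
  by (induction n) auto

lemma sum_invol_bit:
  fixes g :: "'a \<Rightarrow> bit"
  assumes "finite S" "\<And>x. x \<in> S \<Longrightarrow> \<sigma> x \<in> S" "\<And>x. x \<in> S \<Longrightarrow> \<sigma> (\<sigma> x) = x"
    "\<And>x. x \<in> S \<Longrightarrow> g (\<sigma> x) = g x"
  shows "sum g S = sum g {x\<in>S. \<sigma> x = x}"
  using assms
proof (induction "card S" arbitrary: S rule: less_induct)
  case less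
  show ?case
  proof (cases "\<exists>x\<in>S. \<sigma> x \<noteq> x")
    case False
    then have "{x\<in>S. \<sigma> x = x} = S" by auto
    then show ?thesis by simp
  next
    case True
    then obtain x where x: "x \<in> S" "\<sigma> x \<noteq> x" by blast
    define S' where "S' = S - {x, \<sigma> x}"
    have sx: "\<sigma> x \<in> S" using less x by auto
    have S'sub: "S' \<subset> S" using x S'_def by auto
    have cS': "card S' < card S" using psubset_card_mono[OF less(2) S'sub] .
    have h1: "\<And>y. y \<in> S' \<Longrightarrow> \<sigma> y \<in> S'"
    proof -
      fix y assume y: "y \<in> S'"
      then have "y \<in> S" "y \<noteq> x" "y \<noteq> \<sigma> x" by (auto simp: S'_def)
      then show "\<sigma> y \<in> S'" using less(3,4)[of y] less(4)[of x] x unfolding S'_def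
        by (metis Diff_iff insertE singletonD)
    qed
    have IH: "sum g S' = sum g {y\<in>S'. \<sigma> y = y}"
      using less(1)[OF cS'] less(2-5) h1 S'_def by auto
    have "S = insert x (insert (\<sigma> x) S')" using x sx S'_def by auto
    have fS': "finite S'" using less(2) S'_def by auto
    have n1: "x \<notin> insert (\<sigma> x) S'" using x S'_def by auto
    have n2: "\<sigma> x \<notin> S'" using S'_def by auto
    have "sum g S = g x + (g (\<sigma> x) + sum g S')"
      by (subst \<open>S = _\<close>, subst sum.insert[OF _ n1], simp add: fS', subst sum.insert[OF fS' n2], rule refl)
    then have "sum g S = g x + g (\<sigma> x) + sum g S'" by (simp only: add.assoc)
    also have "g (\<sigma> x) = g x" using less(5) x by auto
    finally have e1: "sum g S = sum g S'" by simp
    have "{y\<in>S'. \<sigma> y = y} = {y\<in>S. \<sigma> y = y}"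
      using x less(4)[of x] unfolding S'_def by auto
    then show ?thesis using e1 IH by simp
  qed
qed

lemma card_invol_bit:
  assumes "finite S" "\<And>x. x \<in> S \<Longrightarrow> \<sigma> x \<in> S" "\<And>x. x \<in> S \<Longrightarrow> \<sigma> (\<sigma> x) = x"
  shows "(of_nat (card S) :: bit) = of_nat (card {x\<in>S. \<sigma> x = x})"
  using sum_invol_bit[of S \<sigma> "\<lambda>_. 1::bit"] assms by (simp only: sum_constant mult_1_right)

lemma bit_mult_self [simp]: "(x::bit) * x = x"
  by (cases x) auto

lemma card_conv:
  fixes f :: "'a \<Rightarrow> nat" and g :: "'b \<Rightarrow> nat"
  assumes "\<And>i. finite {x\<in>X. f x = i}" "\<And>i. finite {y\<in>Y. g y = i}"
  shows "card {(x,y). x\<in>X \<and> y\<in>Y \<and> f x + g y = n}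
         = (\<Sum>i=0..n. card {x\<in>X. f x = i} * card {y\<in>Y. g y = n - i})"
proof -
  have eq: "{(x,y). x\<in>X \<and> y\<in>Y \<and> f x + g y = n}
      = (\<Union>i\<in>{0..n}. {x\<in>X. f x = i} \<times> {y\<in>Y. g y = n - i})"
    by auto
  have "card (\<Union>i\<in>{0..n}. {x\<in>X. f x = i} \<times> {y\<in>Y. g y = n - i})
      = (\<Sum>i=0..n. card ({x\<in>X. f x = i} \<times> {y\<in>Y. g y = n - i}))"
    by (rule card_UN_disjoint) (use assms in auto)
  then show ?thesis unfolding eq by (simp add: card_cartesian_product)
qed

lemma conv_fps:
  "fps_nth (Abs_fps (\<lambda>n. of_nat (a n)) * Abs_fps (\<lambda>n. of_nat (w n)) :: 'r::comm_semiring_1 fps) n = of_nat (\<Sum>i=0..n. a i * w (n-i))"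
  by (simp add: fps_mult_nth)

definition sets_of :: "nat set \<Rightarrow> nat \<Rightarrow> nat set set" where
  "sets_of K n = {S. S \<subseteq> K \<and> finite S \<and> \<Sum>S = n}"

lemma sets_of_sub: "sets_of K n \<subseteq> Pow {..n}"
proof
  fix S assume S: "S \<in> sets_of K n"
  then have "finite S" "\<Sum>S = n" by (auto simp: sets_of_def)
  then have "x \<le> n" if "x \<in> S" for x
    using member_le_sum[of x S "\<lambda>x. x"] that by auto
  then show "S \<in> Pow {..n}" by auto
qed

lemma finite_sets_of [simp]: "finite (sets_of K n)"
  by (rule finite_subset[OF sets_of_sub]) auto

definition gfD :: "nat set \<Rightarrow> bit fps" where
  "gfD K = Abs_fps (\<lambda>n. of_nat (card (sets_of K n)))"

definition pcount :: "nat set \<Rightarrow> nat set \<Rightarrow> nat \<Rightarrow> nat" where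
  "pcount K1 K2 n = card {(X,Y). X \<subseteq> K1 \<and> finite X \<and> Y \<subseteq> K2 \<and> finite Y \<and> \<Sum>X + \<Sum>Y = n}"

lemma pcount_fps: "(of_nat (pcount K1 K2 n) :: bit) = (gfD K1 * gfD K2) $ n"
proof -
  have "pcount K1 K2 n = card {(X,Y). X \<in> {S. S \<subseteq> K1 \<and> finite S} \<and> Y \<in> {S. S \<subseteq> K2 \<and> finite S}
        \<and> \<Sum>X + \<Sum>Y = n}"
    unfolding pcount_def by (rule arg_cong[where f=card]) auto
  also have "\<dots> = (\<Sum>i=0..n. card {x\<in>{S. S \<subseteq> K1 \<and> finite S}. \<Sum>x = i}
          * card {y\<in>{S. S \<subseteq> K2 \<and> finite S}. \<Sum>y = n - i})"
    by (rule card_conv) (auto intro: finite_subset[OF _ finite_sets_of] simp: sets_of_def)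
  also have "\<dots> = (\<Sum>i=0..n. card (sets_of K1 i) * card (sets_of K2 (n - i)))"
    by (simp add: sets_of_def conj_commute conj_left_commute)
  finally show ?thesis unfolding gfD_def by (simp add: conv_fps)
qed

lemma union_in_sets_of:
  assumes "X \<subseteq> K1" "finite X" "Y \<subseteq> K2" "finite Y" "\<Sum>X + \<Sum>Y = n" "K1 \<inter> K2 = {}"
  shows "X \<union> Y \<in> sets_of (K1 \<union> K2) n"
proof -
  have "X \<inter> Y = {}" using assms by auto
  then have "\<Sum>(X \<union> Y) = n" using assms by (simp add: sum.union_disjoint)
  then show ?thesis using assms by (auto simp: sets_of_def)
qed

lemma card_sets_of_union:
  assumes "K1 \<inter> K2 = {}"
  shows "card (sets_of (K1 \<union> K2) n) = pcount K1 K2 n"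
  unfolding pcount_def
proof (rule bij_betw_same_card[of "\<lambda>S. (S \<inter> K1, S \<inter> K2)"], rule bij_betw_byWitness[where f'="\<lambda>(X,Y). X \<union> Y"])
  show "\<forall>a\<in>sets_of (K1 \<union> K2) n. (\<lambda>(X, Y). X \<union> Y) (a \<inter> K1, a \<inter> K2) = a"
    by (auto simp: sets_of_def)
  show "\<forall>a'\<in>{(X, Y). X \<subseteq> K1 \<and> finite X \<and> Y \<subseteq> K2 \<and> finite Y \<and> \<Sum>X + \<Sum>Y = n}.
       ((case a' of (X, Y) \<Rightarrow> X \<union> Y) \<inter> K1, (case a' of (X, Y) \<Rightarrow> X \<union> Y) \<inter> K2) = a'"
    using assms by auto
  show "(\<lambda>S. (S \<inter> K1, S \<inter> K2)) ` sets_of (K1 \<union> K2) n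
    \<subseteq> {(X, Y). X \<subseteq> K1 \<and> finite X \<and> Y \<subseteq> K2 \<and> finite Y \<and> \<Sum>X + \<Sum>Y = n}"
  proof safe
    fix S assume S: "S \<in> sets_of (K1 \<union> K2) n"
    then have "S = (S \<inter> K1) \<union> (S \<inter> K2)" "finite S" by (auto simp: sets_of_def)
    then have "\<Sum>S = \<Sum>(S \<inter> K1) + \<Sum>(S \<inter> K2)"
      using assms by (metis (no_types, lifting) disjoint_iff finite_Un inf.absorb_iff2 inf_commute inf_le1 sum.union_disjoint IntE)
    then show "\<Sum>(S \<inter> K1) + \<Sum>(S \<inter> K2) = n" using S by (simp add: sets_of_def)
  qed (auto simp: sets_of_def)
  show "(\<lambda>(X, Y). X \<union> Y) ` {(X, Y). X \<subseteq> K1 \<and> finite X \<and> Y \<subseteq> K2 \<and> finite Y \<and> \<Sum>X + \<Sum>Y = n}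
    \<subseteq> sets_of (K1 \<union> K2) n"
    using assms by (auto intro: union_in_sets_of)
qed

lemma gfD_union: "K1 \<inter> K2 = {} \<Longrightarrow> gfD (K1 \<union> K2) = gfD K1 * gfD K2"
proof (rule fps_ext)
  fix n assume "K1 \<inter> K2 = {}"
  have "gfD (K1 \<union> K2) $ n = of_nat (card (sets_of (K1 \<union> K2) n))" by (simp add: gfD_def)
  also have "\<dots> = of_nat (pcount K1 K2 n)" using \<open>K1 \<inter> K2 = {}\<close> by (simp only: card_sets_of_union)
  finally show "gfD (K1 \<union> K2) $ n = (gfD K1 * gfD K2) $ n" by (simp only: pcount_fps)
qed

definition stretch :: "nat \<Rightarrow> 'a::zero fps \<Rightarrow> 'a fps" where
  "stretch k f = Abs_fps (\<lambda>n. if k dvd n then f $ (n div k) else 0)"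

lemma card_sets_of_image:
  assumes "0 < k"
  shows "card (sets_of ((*) k ` K) n) = (if k dvd n then card (sets_of K (n div k)) else 0)"
proof (cases "k dvd n")
  case False
  have "sets_of ((*) k ` K) n = {}"
  proof (rule ccontr)
    assume "sets_of ((*) k ` K) n \<noteq> {}"
    then obtain S where S: "S \<subseteq> (*) k ` K" "\<Sum>S = n" by (auto simp: sets_of_def)
    then have "k dvd \<Sum>S" by (intro dvd_sum) auto
    then show False using False S by simp
  qed
  then show ?thesis using False by simp
next
  case True
  have inj: "inj ((*) k)" using assms by (auto simp: inj_on_def)
  have "bij_betw ((`) ((*) k)) (sets_of K (n div k)) (sets_of ((*) k ` K) n)"
  proof (rule bij_betw_byWitness[where f'="(`) (\<lambda>x. x div k)"])
    show "\<forall>a\<in>sets_of K (n div k). (\<lambda>x. x div k) ` (*) k ` a = a"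
      using assms by (auto simp: image_image)
    show "\<forall>a'\<in>sets_of ((*) k ` K) n. (*) k ` (\<lambda>x. x div k) ` a' = a'"
      using assms by (force simp: image_image sets_of_def)
    show "(`) ((*) k) ` sets_of K (n div k) \<subseteq> sets_of ((*) k ` K) n"
    proof safe
      fix S assume S: "S \<in> sets_of K (n div k)"
      then have "\<Sum>((*) k ` S) = k * \<Sum>S"
        using inj by (simp add: sum.reindex inj_on_def sum_distrib_left)
      then show "(*) k ` S \<in> sets_of ((*) k ` K) n" using S True by (auto simp: sets_of_def)
    qed
    show "(`) (\<lambda>x. x div k) ` sets_of ((*) k ` K) n \<subseteq> sets_of K (n div k)"
    proof safe
      fix S assume S: "S \<in> sets_of ((*) k ` K) n"
      then have S2: "S = (*) k ` ((\<lambda>x. x div k) ` S)" using assms by (force simp: image_image sets_of_def)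
      have fin: "finite ((\<lambda>x. x div k) ` S)" using S by (auto simp: sets_of_def)
      have "n = \<Sum>S" using S by (simp add: sets_of_def)
      also have "\<dots> = k * \<Sum>((\<lambda>x. x div k) ` S)"
        by (subst S2, simp add: sum.reindex inj inj_on_def sum_distrib_left)
      finally have "\<Sum>((\<lambda>x. x div k) ` S) = n div k" using assms by simp
      then show "(\<lambda>x. x div k) ` S \<in> sets_of K (n div k)"
        using S fin assms by (auto simp: sets_of_def)
    qed
  qed
  then show ?thesis using True bij_betw_same_card by metis
qed

lemma gfD_image: "0 < k \<Longrightarrow> gfD ((*) k ` K) = stretch k (gfD K)"
  by (rule fps_ext) (simp add: gfD_def stretch_def card_sets_of_image)

lemma frob: "(f :: bit fps) ^ 2 = stretch 2 f"
proof (rule fps_ext)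
  fix n
  have "(f ^ 2) $ n = (\<Sum>i\<in>{0..n}. f $ i * f $ (n - i))"
    by (simp add: power2_eq_square fps_mult_nth)
  also have "\<dots> = (\<Sum>i\<in>{i\<in>{0..n}. n - i = i}. f $ i * f $ (n - i))"
    by (rule sum_invol_bit) (auto simp: mult.commute)
  also have "\<dots> = stretch 2 f $ n"
  proof (cases "even n")
    case True
    then have "{i\<in>{0..n}. n - i = i} = {n div 2}" by auto
    moreover have "n - n div 2 = n div 2" using True by auto
    ultimately show ?thesis using True by (simp only: sum.insert sum.empty stretch_def fps_nth_Abs_fps finite.emptyI empty_iff if_True add_0_right bit_mult_self not_False_eq_True)
  next
    case False
    then have "{i\<in>{0..n}. n - i = i} = {}" by (auto; presburger)
    then show ?thesis using False by (simp only: sum.empty stretch_def fps_nth_Abs_fps if_False even_numeral dvd_def)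
  qed
  finally show "(f ^ 2) $ n = stretch 2 f $ n" .
qed

lemma frob4: "(f :: bit fps) ^ 4 = stretch 4 f"
proof -
  have "f ^ 4 = (f ^ 2) ^ 2" by (simp flip: power_mult)
  also have "\<dots> = stretch 2 (stretch 2 f)" by (simp add: frob)
  also have "\<dots> = stretch 4 f"
  proof (rule fps_ext)
    fix n :: nat
    have "(2 dvd n \<and> 2 dvd n div 2) = (4 dvd n)" by presburger
    moreover have "n div 2 div 2 = n div 4" by (simp add: div_mult2_eq)
    ultimately show "stretch 2 (stretch 2 f) $ n = stretch 4 f $ n"
      by (auto simp: stretch_def)
  qed
  finally show ?thesis .
qed

section \<open>Maya diagrams\<close>

definition maya :: "(nat set \<times> nat set) set" where
  "maya = {(A,B). finite A \<and> finite B \<and> 0 \<notin> A}"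

definition en :: "nat set \<times> nat set \<Rightarrow> nat" where
  "en p = \<Sum>(fst p) + \<Sum>(snd p)"

definition ch :: "nat set \<times> nat set \<Rightarrow> int" where
  "ch p = int (card (fst p)) - int (card (snd p))"

definition shift :: "nat set \<times> nat set \<Rightarrow> nat set \<times> nat set" where
  "shift p = (Suc ` fst p \<union> (if 0 \<in> snd p then {} else {1}), (\<lambda>x. x - 1) ` (snd p - {0}))"

definition unshift :: "nat set \<times> nat set \<Rightarrow> nat set \<times> nat set" where
  "unshift p = ((\<lambda>x. x - 1) ` (fst p - {1}), Suc ` snd p \<union> (if 1 \<in> fst p then {} else {0}))"

lemma Suc_pred_mem: "0 \<notin> B \<Longrightarrow> x \<in> B \<Longrightarrow> Suc (x - 1) = x"
  by (cases x) auto

lemma Suc_pred_mem': "0 \<notin> B \<Longrightarrow> x \<in> B \<Longrightarrow> Suc (x - Suc 0) = x"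
  by (cases x) auto

lemma shift_maya: "p \<in> maya \<Longrightarrow> shift p \<in> maya"
  by (auto simp: maya_def shift_def)

lemma unshift_maya: "p \<in> maya \<Longrightarrow> unshift p \<in> maya"
  by (auto simp: maya_def unshift_def) (metis le_Suc_eq le_zero_eq)+

lemma pred_Suc_image [simp]: "(\<lambda>x. x - 1) ` Suc ` A = A"
  by (simp add: image_image)

lemma Suc_pred_image: "0 \<notin> B \<Longrightarrow> Suc ` (\<lambda>x. x - 1) ` B = B"
proof -
  assume "0 \<notin> B"
  then have "Suc ` (\<lambda>x. x - 1) ` B = (\<lambda>x. x) ` B"
    unfolding image_image by (intro image_cong) (auto intro: Suc_pred_mem Suc_pred_mem')
  then show ?thesis by simp
qed

lemma unshift_shift: "p \<in> maya \<Longrightarrow> unshift (shift p) = p"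
proof -
  assume "p \<in> maya"
  then obtain A B where p: "p = (A,B)" and A0: "0 \<notin> A" by (cases p) (auto simp: maya_def)
  let ?A' = "Suc ` A \<union> (if 0 \<in> B then {} else {1})"
  have n1: "1 \<notin> Suc ` A" using A0 by auto
  have e1: "?A' - {1} = Suc ` A" using n1 by auto
  have e2: "(1 \<in> ?A') = (0 \<notin> B)" using n1 by auto
  have e3: "Suc ` (\<lambda>x. x - 1) ` (B - {0}) = B - {0}" by (rule Suc_pred_image) auto
  have e4: "(B - {0}) \<union> (if 0 \<notin> B then {} else {0}) = B" by auto
  show ?thesis unfolding p shift_def unshift_def fst_conv snd_conv e1 e2 e3 pred_Suc_image
    using e4 by simp
qed

lemma shift_unshift: "p \<in> maya \<Longrightarrow> shift (unshift p) = p"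
proof -
  assume "p \<in> maya"
  then obtain A B where p: "p = (A,B)" and A0: "0 \<notin> A" by (cases p) (auto simp: maya_def)
  let ?B' = "Suc ` B \<union> (if 1 \<in> A then {} else {0})"
  have n0: "0 \<notin> Suc ` B" by auto
  have e1: "?B' - {0} = Suc ` B" using n0 by auto
  have e2: "(0 \<in> ?B') = (1 \<notin> A)" using n0 by auto
  have e3: "Suc ` (\<lambda>x. x - 1) ` (A - {1}) = A - {1}"
  proof -
    have "Suc ` (\<lambda>x. x - 1) ` (A - {1}) = Suc ` ((\<lambda>x. x - 1) ` (A - {1}))" by simp
    moreover have "(\<lambda>x. x - 1) ` (A - {1}) = (\<lambda>x. x - 1) ` (A - {1})" ..
    have "\<And>x. x \<in> A - {1} \<Longrightarrow> Suc (x - 1) = x" using A0 by (auto intro: Suc_pred_mem Suc_pred_mem')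
    then have "Suc ` (\<lambda>x. x - 1) ` (A - {1}) = (\<lambda>x. x) ` (A - {1})"
      unfolding image_image by (intro image_cong) (auto simp del: One_nat_def)
    then show ?thesis by simp
  qed
  have e4: "(A - {1}) \<union> (if 1 \<notin> A then {} else {1}) = A" by auto
  show ?thesis unfolding p shift_def unshift_def fst_conv snd_conv e1 e2 e3 pred_Suc_image
    using e4 by simp
qed

lemma sum_Suc_image: "finite A \<Longrightarrow> \<Sum>(Suc ` A) = \<Sum>A + card A"
  by (simp add: sum.reindex) (induction A rule: finite_induct, auto)

lemma sum_pred_image:
  assumes "finite B" "0 \<notin> B"
  shows "\<Sum>((\<lambda>x. x - 1) ` B) + card B = \<Sum>B"
proof -
  have inj: "inj_on (\<lambda>x. x - 1) B" using assms by (auto simp: inj_on_def) (metis Suc_pred_mem')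
  have "\<Sum>((\<lambda>x. x - 1) ` B) + card B = (\<Sum>x\<in>B. x - 1) + (\<Sum>x\<in>B. 1)"
    using inj by (simp add: sum.reindex)
  also have "\<dots> = (\<Sum>x\<in>B. x - 1 + 1)" by (simp only: sum.distrib)
  also have "\<dots> = \<Sum>B"
  proof (intro sum.cong)
    fix x assume xB: "x \<in> B"
    have "x \<noteq> 0"
    proof
      assume "x = 0" with xB assms(2) show False by simp
    qed
    then show "x - 1 + 1 = x" by simp
  qed simp
  finally show ?thesis .
qed

lemma shift_ch_en:
  assumes "p \<in> maya"
  shows "ch (shift p) = ch p + 1" "int (en (shift p)) = int (en p) + ch p + 1"
proof -
  obtain A B where p: "p = (A,B)" by (cases p)
  have fA: "finite A" and fB: "finite B" and A0: "0 \<notin> A" using assms p by (auto simp: maya_def)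
  have inj: "inj_on (\<lambda>x. x - 1) (B - {0})" by (auto simp: inj_on_def)
  have c1: "card ((\<lambda>x. x - 1) ` (B - {0})) = card (B - {0})"
    using card_image[OF inj] .
  have n1: "1 \<notin> Suc ` A" using A0 by auto
  have cA: "card (Suc ` A \<union> (if 0 \<in> B then {} else {1})) = card A + (if 0 \<in> B then 0 else 1)"
    using n1 fA by (auto simp: card_image)
  have sA: "\<Sum>(Suc ` A \<union> (if 0 \<in> B then {} else {1})) = \<Sum>A + card A + (if 0 \<in> B then 0 else 1)"
    using n1 fA by (auto simp: sum_Suc_image)
  have cB: "card (B - {0}) + (if 0 \<in> B then 1 else 0) = card B"
    using fB by (auto simp: card_Diff_singleton_if) (metis One_nat_def Suc_pred card_gt_0_iff empty_iff)
  have sB: "\<Sum>((\<lambda>x. x - 1) ` (B - {0})) + card (B - {0}) = \<Sum>B"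
    using sum_pred_image[of "B - {0}"] fB by (simp add: sum_diff1_nat)
  show "ch (shift p) = ch p + 1"
    using cA cB c1 unfolding ch_def shift_def p by (auto split: if_splits)
  have N: "en (shift p) + card B = en p + card A + 1"
    using sA sB cB c1 unfolding en_def shift_def p by (auto split: if_splits)
  have chp: "ch p = int (card A) - int (card B)" by (simp add: ch_def p)
  show "int (en (shift p)) = int (en p) + ch p + 1"
    using arg_cong[OF N, of int] chp by simp
qed

lemma en_bound:
  assumes "p \<in> maya"
  shows "fst p \<subseteq> {..en p}" "snd p \<subseteq> {..en p}"
  using assms member_le_sum[of _ "fst p" "\<lambda>x. x"] member_le_sum[of _ "snd p" "\<lambda>x. x"]
  by (fastforce simp: maya_def en_def)+

lemma finite_maya_en: "finite {p\<in>maya. en p = n}"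
proof (rule finite_subset)
  show "{p\<in>maya. en p = n} \<subseteq> Pow {..n} \<times> Pow {..n}"
    using en_bound by fastforce
qed auto

definition W :: "int \<Rightarrow> int \<Rightarrow> nat" where
  "W c e = card {p\<in>maya. ch p = c \<and> int (en p) = e}"

lemma W_shift: "W (c + 1) (e + c + 1) = W c e"
proof -
  have "bij_betw shift {p\<in>maya. ch p = c \<and> int (en p) = e} {p\<in>maya. ch p = c + 1 \<and> int (en p) = e + c + 1}"
  proof (rule bij_betw_byWitness[where f'=unshift])
    show "\<forall>a\<in>{p \<in> maya. ch p = c \<and> int (en p) = e}. unshift (shift a) = a"
      by (simp add: unshift_shift)
    show "\<forall>a'\<in>{p \<in> maya. ch p = c + 1 \<and> int (en p) = e + c + 1}. shift (unshift a') = a'"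
      by (simp add: shift_unshift)
    show "shift ` {p \<in> maya. ch p = c \<and> int (en p) = e} \<subseteq> {p \<in> maya. ch p = c + 1 \<and> int (en p) = e + c + 1}"
    proof (rule image_subsetI)
      fix q assume q: "q \<in> {p \<in> maya. ch p = c \<and> int (en p) = e}"
      then have m: "q \<in> maya" by blast
      have "ch (shift q) = c + 1" "int (en (shift q)) = e + c + 1"
        using shift_ch_en[OF m] q by auto
      then show "shift q \<in> {p \<in> maya. ch p = c + 1 \<and> int (en p) = e + c + 1}"
        using shift_maya[OF m] by blast
    qed
    show "unshift ` {p \<in> maya. ch p = c + 1 \<and> int (en p) = e + c + 1} \<subseteq> {p \<in> maya. ch p = c \<and> int (en p) = e}"
    proof (rule image_subsetI)
      fix q assume q: "q \<in> {p \<in> maya. ch p = c + 1 \<and> int (en p) = e + c + 1}"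
      then have m: "unshift q \<in> maya" using unshift_maya by auto
      have qq: "shift (unshift q) = q" using q shift_unshift by blast
      have "ch q = ch (unshift q) + 1" "int (en q) = int (en (unshift q)) + ch (unshift q) + 1"
        using shift_ch_en[OF m] unfolding qq by simp_all
      then have "ch (unshift q) = c" "int (en (unshift q)) = e" using q by simp_all
      then show "unshift q \<in> {p \<in> maya. ch p = c \<and> int (en p) = e}" using m by blast
    qed
  qed
  then show ?thesis unfolding W_def by (rule bij_betw_same_card[symmetric])
qed

definition tri :: "int \<Rightarrow> int" where "tri c = c * (c + 1) div 2"

lemma tri_Suc: "tri (c + 1) = tri c + c + 1"
proof -
  have "(c + 1) * (c + 1 + 1) = c * (c + 1) + 2 * (c + 1)" by (simp add: algebra_simps)
  then show ?thesis unfolding tri_def by simp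
qed

lemma W_tri: "W c e = W 0 (e - tri c)"
proof -
  have step: "(\<forall>e. W c e = W 0 (e - tri c)) \<longleftrightarrow> (\<forall>e. W (c+1) e = W 0 (e - tri (c+1)))" for c
  proof
    assume H: "\<forall>e. W c e = W 0 (e - tri c)"
    show "\<forall>e. W (c+1) e = W 0 (e - tri (c+1))"
    proof
      fix e
      have "W (c+1) e = W (c+1) ((e - c - 1) + c + 1)" by simp
      also have "\<dots> = W c (e - c - 1)" by (rule W_shift)
      also have "\<dots> = W 0 (e - tri (c+1))" using H tri_Suc[of c] by (simp add: algebra_simps)
      finally show "W (c+1) e = W 0 (e - tri (c+1))" .
    qed
  next
    assume H: "\<forall>e. W (c+1) e = W 0 (e - tri (c+1))"
    show "\<forall>e. W c e = W 0 (e - tri c)"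
    proof
      fix e
      have "W c e = W (c+1) (e + c + 1)" by (rule W_shift[symmetric])
      also have "\<dots> = W 0 (e - tri c)" using H tri_Suc[of c] by (simp add: algebra_simps)
      finally show "W c e = W 0 (e - tri c)" .
    qed
  qed
  have "\<forall>e. W c e = W 0 (e - tri c)"
  proof (induction c rule: int_induct[where k=0])
    case base then show ?case by (simp add: tri_def)
  next
    case (step1 i) then show ?case using step by blast
  next
    case (step2 i) then show ?case using step[of "i - 1"] by simp
  qed
  then show ?thesis by blast
qed


lemma tri2: "2 * tri c = c * (c + 1)"
proof -
  have "even (c * (c + 1))" by simp
  then show ?thesis unfolding tri_def by simp
qed

lemma tri_nonneg: "0 \<le> tri c"
proof -
  have "0 \<le> c * (c + 1)"
    by (cases "c \<ge> 0") (simp_all add: zero_le_mult_iff)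
  then show ?thesis using tri2[of c] by simp
qed

lemma abs_le_sq: "\<bar>c::int\<bar> \<le> c * c"
proof (cases "c = 0")
  case False
  then have "\<bar>c\<bar> * 1 \<le> \<bar>c\<bar> * \<bar>c\<bar>" by (intro mult_left_mono) auto
  then show ?thesis by (simp add: abs_mult_self_eq)
qed simp

lemma quad_bound:
  assumes "2 \<le> a"
  shows "\<bar>c\<bar> \<le> a * tri c - c"
proof -
  have "a * tri c \<ge> 2 * tri c" using assms tri_nonneg[of c] by (rule mult_right_mono)
  then have "a * tri c - c \<ge> c * c" using tri2[of c] by (simp add: algebra_simps)
  then show ?thesis using abs_le_sq[of c] by linarith
qed

definition Zc :: "nat \<Rightarrow> nat" where "Zc m = W 0 (int m)"

lemma card_le_sum_pos: "finite A \<Longrightarrow> 0 \<notin> A \<Longrightarrow> card A \<le> \<Sum>A"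
proof -
  assume "finite A" "0 \<notin> A"
  then have "(\<Sum>x\<in>A. 1) \<le> (\<Sum>x\<in>A. x)"
    by (intro sum_mono) (metis One_nat_def Suc_leI gr0I)
  then show ?thesis by simp
qed

lemma ch_bounds:
  assumes "p \<in> maya"
  shows "ch p \<le> int (en p)" "- ch p \<le> int (en p) + 1"
proof -
  obtain A B where p: "p = (A,B)" and fA: "finite A" and fB: "finite B" and A0: "0 \<notin> A"
    using assms by (cases p) (auto simp: maya_def)
  have "card A \<le> \<Sum>A + \<Sum>B" using card_le_sum_pos[OF fA A0] by linarith
  then have "int (card A) \<le> int (\<Sum>A + \<Sum>B)" by (simp only: of_nat_le_iff)
  moreover have "0 \<le> int (card B)" by simp
  ultimately show "ch p \<le> int (en p)" unfolding ch_def en_def p fst_conv snd_conv by linarith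
  have "card (B - {0}) \<le> \<Sum>(B - {0})" using card_le_sum_pos[of "B - {0}"] fB by simp
  moreover have "\<Sum>(B - {0}) = \<Sum>B" using fB by (simp add: sum_diff1_nat)
  moreover have "card B \<le> card (B - {0}) + 1"
  proof -
    have "card B \<le> card (insert 0 (B - {0}))" using fB by (intro card_mono) auto
    also have "\<dots> \<le> card (B - {0}) + 1" using fB by (subst card_insert_if) auto
    finally show ?thesis .
  qed
  ultimately have "card B \<le> \<Sum>A + \<Sum>B + 1" by linarith
  then have "int (card B) \<le> int (\<Sum>A + \<Sum>B) + 1" by (simp only: of_nat_le_iff of_nat_Suc[symmetric] Suc_eq_plus1)
  moreover have "0 \<le> int (card A)" by simp
  ultimately show "- ch p \<le> int (en p) + 1" unfolding ch_def en_def p fst_conv snd_conv by linarith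
qed

definition Na :: "nat \<Rightarrow> nat \<Rightarrow> nat" where
  "Na a n = card {p\<in>maya. int a * int (en p) - ch p = int n}"

lemma fiber_eq:
  assumes "2 \<le> a"
  shows "card {q\<in>{p\<in>maya. ch p = 0}. (a * tri c - c) + int a * int (en q) = int n}
       = card {p\<in>maya. ch p = c \<and> int a * int (en p) - c = int n}"
proof (cases "int a dvd int n + c")
  case True
  then obtain k where k: "int n + c = int a * k" by (elim dvdE)
  have apos: "0 < int a" using assms by simp
  have "{q\<in>{p\<in>maya. ch p = 0}. (a * tri c - c) + int a * int (en q) = int n}
      = {q\<in>maya. ch q = 0 \<and> int (en q) = k - tri c}"
  proof -
    have "(a * tri c - c) + int a * int (en q) = int n \<longleftrightarrow> int (en q) = k - tri c" for q
    proof -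
      have "(a * tri c - c) + int a * int (en q) = int n \<longleftrightarrow> int a * (int (en q) + tri c) = int a * k"
        by (rule iffI; use k in \<open>simp add: algebra_simps\<close>)
      also have "\<dots> \<longleftrightarrow> int (en q) + tri c = k" using apos by simp
      finally show ?thesis by linarith
    qed
    then show ?thesis by auto
  qed
  moreover have "{p\<in>maya. ch p = c \<and> int a * int (en p) - c = int n}
      = {p\<in>maya. ch p = c \<and> int (en p) = k}"
  proof -
    have "int a * int (en p) - c = int n \<longleftrightarrow> int (en p) = k" for p
    proof -
      have "int a * int (en p) - c = int n \<longleftrightarrow> int a * int (en p) = int a * k"
        by (rule iffI; use k in linarith)
      also have "\<dots> \<longleftrightarrow> int (en p) = k" using apos by simp
      finally show ?thesis .
    qed
    then show ?thesis by auto
  qed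
  ultimately show ?thesis using W_tri[of c k] unfolding W_def by simp
next
  case False
  have e1: "{q\<in>{p\<in>maya. ch p = 0}. (a * tri c - c) + int a * int (en q) = int n} = {}"
  proof (rule ccontr)
    assume "\<not> ?thesis"
    then obtain q where "(a * tri c - c) + int a * int (en q) = int n" by auto
    then have "int n + c = int a * (int (en q) + tri c)" by (simp add: algebra_simps)
    then show False using False by simp
  qed
  moreover have e2: "{p\<in>maya. ch p = c \<and> int a * int (en p) - c = int n} = {}"
  proof (rule ccontr)
    assume "\<not> ?thesis"
    then obtain p where "ch p = c" "int a * int (en p) - c = int n" by auto
    then have "int n + c = int a * int (en p)" by simp
    then show False using False by simp
  qed
  show ?thesis unfolding e1 e2 ..
qed

lemma finite_maya_le: "finite {p\<in>maya. en p \<le> n}"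
proof (rule finite_subset)
  show "{p\<in>maya. en p \<le> n} \<subseteq> Pow {..n} \<times> Pow {..n}"
    using en_bound by fastforce
qed auto

lemma Na_conv:
  assumes a2: "2 \<le> a"
  shows "Na a n = (\<Sum>i=0..n. card {c::int. int a * tri c - c = int i}
                     * (if a dvd (n - i) then Zc ((n - i) div a) else 0))"
proof -
  define f where "f c = nat (int a * tri c - c)" for c
  define g where "g q = a * en q" for q
  define M0 where "M0 = {p\<in>maya. ch p = 0}"
  have a2': "2 \<le> int a" using a2 by simp
  have fnn: "0 \<le> int a * tri c - c" for c using quad_bound[OF a2', of c] by linarith
  have fint: "int (f c) = int a * tri c - c" for c using fnn[of c] by (simp add: f_def)
  have finF: "finite {c\<in>UNIV. f c = i}" for i
  proof (rule finite_subset)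
    show "{c\<in>UNIV. f c = i} \<subseteq> {- int i..int i}"
    proof
      fix c assume "c \<in> {c\<in>UNIV. f c = i}"
      then have "int a * tri c - c = int i" using fint[of c] by simp
      then show "c \<in> {- int i..int i}" using quad_bound[OF a2', of c] by auto
    qed
  qed simp
  have finG: "finite {q\<in>M0. g q = i}" for i
  proof (rule finite_subset)
    show "{q\<in>M0. g q = i} \<subseteq> {p\<in>maya. en p \<le> i}"
      using a2 by (auto simp: M0_def g_def)
  qed (rule finite_maya_le)
  have S1: "card {(c,q). c\<in>UNIV \<and> q\<in>M0 \<and> f c + g q = n}
      = (\<Sum>i=0..n. card {c\<in>UNIV. f c = i} * card {q\<in>M0. g q = n - i})"
    by (rule card_conv[OF finF finG])
  have fc: "card {c\<in>UNIV. f c = i} = card {c::int. int a * tri c - c = int i}" for i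
  proof -
    have "{c\<in>UNIV. f c = i} = {c::int. int a * tri c - c = int i}"
      using fint by (auto simp: f_def)
    then show ?thesis by simp
  qed
  have gc: "card {q\<in>M0. g q = j} = (if a dvd j then Zc (j div a) else 0)" for j
  proof (cases "a dvd j")
    case True
    have "{q\<in>M0. g q = j} = {p\<in>maya. ch p = 0 \<and> int (en p) = int (j div a)}"
      using True a2 by (auto simp: M0_def g_def)
    then show ?thesis using True by (simp add: Zc_def W_def)
  next
    case False
    have e: "{q\<in>M0. g q = j} = {}" using False by (auto simp: M0_def g_def)
    show ?thesis unfolding e using False by simp
  qed
  define I where "I = {- int n - 1..int n}"
  define F where "F c = {q\<in>M0. (int a * tri c - c) + int a * int (en q) = int n}" for c
  define G where "G c = {p\<in>maya. ch p = c \<and> int a * int (en p) - c = int n}" for c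
  have finI: "finite I" by (simp add: I_def)
  have FG: "card (F c) = card (G c)" for c
    unfolding F_def G_def M0_def by (rule fiber_eq[OF a2])
  have L: "{(c,q). c\<in>UNIV \<and> q\<in>M0 \<and> f c + g q = n} = (\<Union>c\<in>I. {c} \<times> F c)"
  proof -
    have eqv: "f c + g q = n \<longleftrightarrow> (int a * tri c - c) + int a * int (en q) = int n" for c q
    proof -
      have "f c + g q = n \<longleftrightarrow> int (f c + g q) = int n" by (simp only: of_nat_eq_iff)
      also have "\<dots> \<longleftrightarrow> (int a * tri c - c) + int a * int (en q) = int n"
        using fint[of c] by (simp add: g_def)
      finally show ?thesis .
    qed
    have mem: "c \<in> I" if "(int a * tri c - c) + int a * int (en q) = int n" for c q
    proof -
      have "0 \<le> int a * int (en q)" by simp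
      then have "int a * tri c - c \<le> int n" using that by linarith
      then show ?thesis using quad_bound[OF a2', of c] by (auto simp: I_def)
    qed
    show ?thesis using eqv mem unfolding F_def by auto
  qed
  have finFc: "finite (F c)" for c
  proof (rule finite_subset[OF _ finite_maya_le[of n]])
    show "F c \<subseteq> {p \<in> maya. en p \<le> n}"
    proof
      fix p assume "p \<in> F c"
      then have p: "p \<in> maya" "(int a * tri c - c) + int a * int (en p) = int n" by (auto simp: F_def M0_def)
      have "1 * int (en p) \<le> int a * int (en p)" using a2' by (intro mult_right_mono) auto
      then have "int (en p) \<le> int n" using p(2) fnn[of c] by linarith
      then show "p \<in> {p \<in> maya. en p \<le> n}" using p by auto
    qed
  qed
  have cardL: "card (\<Union>c\<in>I. {c} \<times> F c) = (\<Sum>c\<in>I. card (F c))"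
    by (subst card_UN_disjoint) (use finI finFc in \<open>auto simp: card_cartesian_product\<close>)
  have R: "{p\<in>maya. int a * int (en p) - ch p = int n} = (\<Union>c\<in>I. G c)"
  proof -
    have "ch p \<in> I" if p: "p \<in> maya" "int a * int (en p) - ch p = int n" for p
    proof -
      have b1: "ch p \<le> int (en p)" "- ch p \<le> int (en p) + 1" using ch_bounds[OF p(1)] by auto
      have "2 * int (en p) \<le> int a * int (en p)" using a2' by (intro mult_right_mono) auto
      then have "int (en p) \<le> int n" using p(2) b1 by linarith
      then show ?thesis using b1 by (auto simp: I_def)
    qed
    then show ?thesis unfolding G_def by auto
  qed
  have finGc: "finite (G c)" for c
  proof (rule finite_subset[OF _ finite_maya_le[of n]])
    show "G c \<subseteq> {p \<in> maya. en p \<le> n}"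
    proof
      fix p assume "p \<in> G c"
      then have p: "p \<in> maya" "int a * int (en p) - ch p = int n" by (auto simp: G_def)
      have b1: "ch p \<le> int (en p)" using ch_bounds[OF p(1)] by auto
      have "2 * int (en p) \<le> int a * int (en p)" using a2' by (intro mult_right_mono) auto
      then have "int (en p) \<le> int n" using p(2) b1 by linarith
      then show "p \<in> {p \<in> maya. en p \<le> n}" using p by auto
    qed
  qed
  have cardR: "card (\<Union>c\<in>I. G c) = (\<Sum>c\<in>I. card (G c))"
    by (rule card_UN_disjoint) (use finI finGc in \<open>auto simp: G_def\<close>)
  have "Na a n = card {(c,q). c\<in>UNIV \<and> q\<in>M0 \<and> f c + g q = n}"
    unfolding Na_def R L cardL cardR FG ..
  also have "\<dots> = (\<Sum>i=0..n. card {c::int. int a * tri c - c = int i}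
                     * (if a dvd (n - i) then Zc ((n - i) div a) else 0))"
    unfolding S1 fc gc ..
  finally show ?thesis .
qed

lemma notin0_pos: "0 \<notin> A \<Longrightarrow> x \<in> A \<Longrightarrow> 0 < (x::nat)"
  by (cases x) auto

definition Km :: "nat \<Rightarrow> nat set" where "Km a = (\<lambda>x. a * x - 1) ` {0<..}"
definition Kp :: "nat \<Rightarrow> nat set" where "Kp a = (\<lambda>x. a * x + 1) ` UNIV"

lemma sum_Km_image:
  assumes "finite A" "0 \<notin> A" "1 \<le> a"
  shows "\<Sum>((\<lambda>x. a * x - 1) ` A) + card A = a * \<Sum>A"
proof -
  have inj: "inj_on (\<lambda>x. a * x - 1) A"
  proof (rule inj_onI)
    fix x y assume "x \<in> A" "y \<in> A" "a * x - 1 = a * y - 1"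
    moreover have "1 \<le> a * x" "1 \<le> a * y" using assms \<open>x \<in> A\<close> \<open>y \<in> A\<close>
      by (metis One_nat_def Suc_leI gr0I mult_pos_pos zero_less_iff_neq_zero zero_less_one_class.zero_le_one le_trans le_numeral_extra(4))+
    ultimately have "a * x = a * y" by linarith
    then show "x = y" using assms by simp
  qed
  have "\<Sum>((\<lambda>x. a * x - 1) ` A) + card A = (\<Sum>x\<in>A. a * x - 1) + (\<Sum>x\<in>A. 1)"
    using inj by (simp add: sum.reindex)
  also have "\<dots> = (\<Sum>x\<in>A. a * x - 1 + 1)" by (simp only: sum.distrib)
  also have "\<dots> = (\<Sum>x\<in>A. a * x)"
  proof (rule sum.cong)
    fix x assume xA: "x \<in> A"
    have "x \<noteq> 0"
    proof
      assume "x = 0" with xA assms(2) show False by simp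
    qed
    then have "1 \<le> a * x" using assms(3) by simp
    then show "a * x - 1 + 1 = a * x" by simp
  qed simp
  also have "\<dots> = a * \<Sum>A" by (simp add: sum_distrib_left)
  finally show ?thesis .
qed

lemma sum_Kp_image:
  assumes "finite B" "1 \<le> a"
  shows "\<Sum>((\<lambda>x. a * x + 1) ` B) = a * \<Sum>B + card B"
proof -
  have inj: "inj_on (\<lambda>x. a * x + 1) B" using assms by (auto simp: inj_on_def)
  have "\<Sum>((\<lambda>x. a * x + 1) ` B) = (\<Sum>x\<in>B. a * x + 1)" using inj by (simp only: sum.reindex o_def)
  also have "\<dots> = (\<Sum>x\<in>B. a * x) + (\<Sum>x\<in>B. 1)" by (rule sum.distrib)
  also have "\<dots> = a * \<Sum>B + card B" by (simp add: sum_distrib_left)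
  finally show ?thesis .
qed

lemma Na_pcount:
  assumes a2: "2 \<le> a"
  shows "Na a n = pcount (Km a) (Kp a) n"
  unfolding Na_def pcount_def
proof (rule bij_betw_same_card[of "\<lambda>(A,B). ((\<lambda>x. a * x - 1) ` A, (\<lambda>x. a * x + 1) ` B)"],
       rule bij_betw_byWitness[where f'="\<lambda>(X,Y). ((\<lambda>y. (y + 1) div a) ` X, (\<lambda>y. (y - 1) div a) ` Y)"])
  have a0: "0 < a" using a2 by simp
  have k1: "(a * x - 1 + 1) div a = x" if "x \<noteq> 0" for x
  proof -
    have "1 \<le> a * x" using a0 that by (simp add: Suc_leI)
    then show ?thesis using a0 by simp
  qed
  have k2: "(a * x + 1 - 1) div a = x" for x using a0 by simp
  show "\<forall>p\<in>{p \<in> maya. int a * int (en p) - ch p = int n}.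
          (\<lambda>(X, Y). ((\<lambda>y. (y + 1) div a) ` X, (\<lambda>y. (y - 1) div a) ` Y))
           ((\<lambda>(A, B). ((\<lambda>x. a * x - 1) ` A, (\<lambda>x. a * x + 1) ` B)) p) = p"
  proof -
    have inv1: "(\<lambda>y. (y + 1) div a) ` (\<lambda>x. a * x - 1) ` A = A \<and> (\<lambda>y. (y - 1) div a) ` (\<lambda>x. a * x + 1) ` B = B"
      if "(A,B) \<in> maya" for A B
    proof -
    from that have A0: "0 \<notin> A" by (simp add: maya_def)
    have "(\<lambda>y. (y + 1) div a) ` (\<lambda>x. a * x - 1) ` A = (\<lambda>x. x) ` A"
      unfolding image_image
    proof (rule image_cong)
      fix x assume xA: "x \<in> A"
      have "x \<noteq> 0"
      proof
        assume "x = 0" with xA A0 show False by simp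
      qed
      then show "(a * x - 1 + 1) div a = x" by (rule k1)
    qed simp
    moreover have "(\<lambda>y. (y - 1) div a) ` (\<lambda>x. a * x + 1) ` B = (\<lambda>x. x) ` B"
      unfolding image_image using k2 by simp
    ultimately show ?thesis by simp
    qed
    show ?thesis
    proof (intro ballI)
      fix q assume q: "q \<in> {p \<in> maya. int a * int (en p) - ch p = int n}"
      obtain A B where qAB: "q = (A,B)" by (cases q)
      have "(A,B) \<in> maya" using q qAB by auto
      then show "(\<lambda>(X, Y). ((\<lambda>y. (y + 1) div a) ` X, (\<lambda>y. (y - 1) div a) ` Y))
           ((\<lambda>(A, B). ((\<lambda>x. a * x - 1) ` A, (\<lambda>x. a * x + 1) ` B)) q) = q"
        using inv1 unfolding qAB by simp
    qed
  qed
  show "\<forall>q\<in>{(X, Y). X \<subseteq> Km a \<and> finite X \<and> Y \<subseteq> Kp a \<and> finite Y \<and> \<Sum>X + \<Sum>Y = n}.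
          (\<lambda>(A, B). ((\<lambda>x. a * x - 1) ` A, (\<lambda>x. a * x + 1) ` B))
           ((\<lambda>(X, Y). ((\<lambda>y. (y + 1) div a) ` X, (\<lambda>y. (y - 1) div a) ` Y)) q) = q"
  proof -
    have inv2: "(\<lambda>x. a * x - 1) ` (\<lambda>y. (y + 1) div a) ` X = X \<and> (\<lambda>x. a * x + 1) ` (\<lambda>y. (y - 1) div a) ` Y = Y"
      if X: "X \<subseteq> Km a" and Y: "Y \<subseteq> Kp a" for X Y
    proof -
    have "(\<lambda>x. a * x - 1) ` (\<lambda>y. (y + 1) div a) ` X = (\<lambda>x. x) ` X"
      unfolding image_image
    proof (rule image_cong)
      fix y assume "y \<in> X"
      then obtain x where "x \<noteq> 0" "y = a * x - 1" using X by (auto simp: Km_def)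
      then show "a * ((y + 1) div a) - 1 = y" using k1 by simp
    qed simp
    moreover have "(\<lambda>x. a * x + 1) ` (\<lambda>y. (y - 1) div a) ` Y = (\<lambda>x. x) ` Y"
      unfolding image_image
    proof (rule image_cong)
      fix y assume "y \<in> Y"
      then obtain x where "y = a * x + 1" using Y by (auto simp: Kp_def)
      then show "a * ((y - 1) div a) + 1 = y" using k2 by simp
    qed simp
    ultimately show ?thesis by simp
    qed
    show ?thesis
    proof (intro ballI)
      fix q assume q: "q \<in> {(X, Y). X \<subseteq> Km a \<and> finite X \<and> Y \<subseteq> Kp a \<and> finite Y \<and> \<Sum>X + \<Sum>Y = n}"
      obtain X Y where qXY: "q = (X,Y)" by (cases q)
      have "X \<subseteq> Km a" "Y \<subseteq> Kp a" using q qXY by auto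
      then show "(\<lambda>(A, B). ((\<lambda>x. a * x - 1) ` A, (\<lambda>x. a * x + 1) ` B))
           ((\<lambda>(X, Y). ((\<lambda>y. (y + 1) div a) ` X, (\<lambda>y. (y - 1) div a) ` Y)) q) = q"
        using inv2 unfolding qXY by simp
    qed
  qed
  have wt: "int a * int (en (A,B)) - ch (A,B) = int (\<Sum>((\<lambda>x. a * x - 1) ` A) + \<Sum>((\<lambda>x. a * x + 1) ` B))"
    if "(A,B) \<in> maya" for A B
  proof -
    have fA: "finite A" and fB: "finite B" and A0: "0 \<notin> A" using that by (auto simp: maya_def)
    have e1: "\<Sum>((\<lambda>x. a * x - 1) ` A) + card A = a * \<Sum>A" using sum_Km_image[OF fA A0] a2 by simp
    have e2: "\<Sum>((\<lambda>x. a * x + 1) ` B) = a * \<Sum>B + card B" using sum_Kp_image[OF fB] a2 by simp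
    have "int (\<Sum>((\<lambda>x. a * x - 1) ` A)) + int (card A) = int a * int (\<Sum>A)"
      using arg_cong[OF e1, of int] by simp
    moreover have "int (\<Sum>((\<lambda>x. a * x + 1) ` B)) = int a * int (\<Sum>B) + int (card B)"
      using arg_cong[OF e2, of int] by simp
    ultimately show ?thesis unfolding en_def ch_def fst_conv snd_conv
      by (simp add: algebra_simps)
  qed
  show "(\<lambda>(A, B). ((\<lambda>x. a * x - 1) ` A, (\<lambda>x. a * x + 1) ` B)) ` {p \<in> maya. int a * int (en p) - ch p = int n}
    \<subseteq> {(X, Y). X \<subseteq> Km a \<and> finite X \<and> Y \<subseteq> Kp a \<and> finite Y \<and> \<Sum>X + \<Sum>Y = n}"
  proof (rule image_subsetI, clarify)
    fix A B assume m: "(A,B) \<in> maya" and w: "int a * int (en (A, B)) - ch (A, B) = int n"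
    have "int (\<Sum>((\<lambda>x. a * x - 1) ` A) + \<Sum>((\<lambda>x. a * x + 1) ` B)) = int n" using wt[OF m] w by simp
    then have "\<Sum>((\<lambda>x. a * x - 1) ` A) + \<Sum>((\<lambda>x. a * x + 1) ` B) = n" by (simp only: of_nat_eq_iff)
    moreover have "A \<subseteq> {0<..}" using m by (auto simp: maya_def intro: notin0_pos)
    ultimately show "(\<lambda>x. a * x - 1) ` A \<subseteq> Km a \<and> finite ((\<lambda>x. a * x - 1) ` A) \<and>
           (\<lambda>x. a * x + 1) ` B \<subseteq> Kp a \<and> finite ((\<lambda>x. a * x + 1) ` B) \<and>
           \<Sum>((\<lambda>x. a * x - 1) ` A) + \<Sum>((\<lambda>x. a * x + 1) ` B) = n"
      using m unfolding Km_def Kp_def maya_def by (auto intro: image_mono)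
  qed
  show "(\<lambda>(X, Y). ((\<lambda>y. (y + 1) div a) ` X, (\<lambda>y. (y - 1) div a) ` Y)) `
    {(X, Y). X \<subseteq> Km a \<and> finite X \<and> Y \<subseteq> Kp a \<and> finite Y \<and> \<Sum>X + \<Sum>Y = n}
    \<subseteq> {p \<in> maya. int a * int (en p) - ch p = int n}"
  proof (rule image_subsetI)
    fix q assume q: "q \<in> {(X, Y). X \<subseteq> Km a \<and> finite X \<and> Y \<subseteq> Kp a \<and> finite Y \<and> \<Sum>X + \<Sum>Y = n}"
    obtain X Y where qXY: "q = (X,Y)" by (cases q)
    have X: "X \<subseteq> Km a" "finite X" and Y: "Y \<subseteq> Kp a" "finite Y" and s: "\<Sum>X + \<Sum>Y = n"
      using q qXY by auto
    define A where "A = (\<lambda>y. (y + 1) div a) ` X"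
    define B where "B = (\<lambda>y. (y - 1) div a) ` Y"
    have A0: "0 \<notin> A"
    proof
      assume "0 \<in> A"
      then obtain y where "y \<in> X" "(y + 1) div a = 0" by (auto simp: A_def)
      moreover obtain x where "x \<noteq> 0" "y = a * x - 1" using X \<open>y \<in> X\<close> by (auto simp: Km_def)
      ultimately show False using k1 by simp
    qed
    have m: "(A,B) \<in> maya" using A0 X Y by (simp add: maya_def A_def B_def)
    have XA: "(\<lambda>x. a * x - 1) ` A = X"
      unfolding A_def image_image
    proof -
      have "(\<lambda>x. a * ((x + 1) div a) - 1) ` X = (\<lambda>x. x) ` X"
      proof (rule image_cong)
        fix y assume "y \<in> X"
        then obtain x where "x \<noteq> 0" "y = a * x - 1" using X by (auto simp: Km_def)
        then show "a * ((y + 1) div a) - 1 = y" using k1 by simp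
      qed simp
      then show "(\<lambda>x. a * ((x + 1) div a) - 1) ` X = X" by simp
    qed
    have YB: "(\<lambda>x. a * x + 1) ` B = Y"
      unfolding B_def image_image
    proof -
      have "(\<lambda>x. a * ((x - 1) div a) + 1) ` Y = (\<lambda>x. x) ` Y"
      proof (rule image_cong)
        fix y assume "y \<in> Y"
        then obtain x where "y = a * x + 1" using Y by (auto simp: Kp_def)
        then show "a * ((y - 1) div a) + 1 = y" using k2 by simp
      qed simp
      then show "(\<lambda>x. a * ((x - 1) div a) + 1) ` Y = Y" by simp
    qed
    have "int a * int (en (A, B)) - ch (A, B) = int n" using wt[OF m] s unfolding XA YB by simp
    then show "(\<lambda>(X, Y). ((\<lambda>y. (y + 1) div a) ` X, (\<lambda>y. (y - 1) div a) ` Y)) q \<in> {p \<in> maya. int a * int (en p) - ch p = int n}"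
      using m unfolding qXY A_def B_def by simp
  qed
qed




definition Th :: "nat \<Rightarrow> bit fps" where
  "Th a = Abs_fps (\<lambda>i. of_nat (card {c::int. int a * tri c - c = int i}))"

definition Zf :: "bit fps" where "Zf = Abs_fps (\<lambda>m. of_nat (Zc m))"

lemma Na_fps:
  assumes "2 \<le> a"
  shows "(of_nat (Na a n) :: bit) = (Th a * stretch a Zf) $ n"
proof -
  have "(of_nat (Na a n) :: bit) = (\<Sum>i=0..n. of_nat (card {c::int. int a * tri c - c = int i})
                     * of_nat (if a dvd (n - i) then Zc ((n - i) div a) else 0))"
    unfolding Na_conv[OF assms] by (simp only: of_nat_sum of_nat_mult)
  also have "\<dots> = (\<Sum>i=0..n. Th a $ i * stretch a Zf $ (n - i))"
  proof (rule sum.cong)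
    fix i
    show "(of_nat (card {c::int. int a * tri c - c = int i}) :: bit)
                     * of_nat (if a dvd (n - i) then Zc ((n - i) div a) else 0) = Th a $ i * stretch a Zf $ (n - i)"
      unfolding Th_def stretch_def Zf_def fps_nth_Abs_fps by (cases "a dvd (n - i)") (simp_all only: if_True if_False of_nat_0)
  qed simp
  also have "\<dots> = (Th a * stretch a Zf) $ n" by (simp only: fps_mult_nth)
  finally show ?thesis .
qed

lemma Th2: "Th 2 = 1"
proof (rule fps_ext)
  fix i
  define S where "S = {c::int. int 2 * tri c - c = int i}"
  have S': "S = {c. c * c = int i}" unfolding S_def using tri2 by (auto simp: algebra_simps)
  have fin: "finite S"
  proof (rule finite_subset)
    show "S \<subseteq> {- int i..int i}"
    proof
      fix c assume "c \<in> S"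
      then have "c * c = int i" unfolding S' by simp
      then have "\<bar>c\<bar> \<le> int i" using abs_le_sq[of c] by simp
      then show "c \<in> {- int i..int i}" by auto
    qed
  qed simp
  have "(of_nat (card S) :: bit) = of_nat (card {c\<in>S. - c = c})"
    by (rule card_invol_bit[OF fin]) (auto simp: S')
  also have "{c\<in>S. - c = c} = (if i = 0 then {0} else {})" by (auto simp: S')
  finally have "(of_nat (card S) :: bit) = (if i = 0 then 1 else 0)" by (cases "i = 0") simp_all
  then show "Th 2 $ i = 1 $ i" unfolding Th_def S_def by simp
qed

lemma finite_pcount_set: "finite {(X,Y). X \<subseteq> K1 \<and> finite X \<and> Y \<subseteq> K2 \<and> finite Y \<and> \<Sum>X + \<Sum>Y = (n::nat)}"
proof (rule finite_subset)
  show "{(X,Y). X \<subseteq> K1 \<and> finite X \<and> Y \<subseteq> K2 \<and> finite Y \<and> \<Sum>X + \<Sum>Y = n} \<subseteq> Pow {..n} \<times> Pow {..n}"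
  proof (rule subsetI)
    fix p assume p: "p \<in> {(X,Y). X \<subseteq> K1 \<and> finite X \<and> Y \<subseteq> K2 \<and> finite Y \<and> \<Sum>X + \<Sum>Y = n}"
    obtain X Y where pXY: "p = (X,Y)" by (cases p)
    have fX: "finite X" and fY: "finite Y" and s: "\<Sum>X + \<Sum>Y = n" using p pXY by auto
    have "X \<subseteq> {..n}"
    proof
      fix x assume "x \<in> X"
      then have "x \<le> \<Sum>X" using member_le_sum[of x X "\<lambda>x. x"] fX by simp
      then show "x \<in> {..n}" using s by simp
    qed
    moreover have "Y \<subseteq> {..n}"
    proof
      fix x assume "x \<in> Y"
      then have "x \<le> \<Sum>Y" using member_le_sum[of x Y "\<lambda>x. x"] fY by simp
      then show "x \<in> {..n}" using s by simp
    qed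
    ultimately show "p \<in> Pow {..n} \<times> Pow {..n}" using pXY by simp
  qed
qed auto

lemma swap_pcount: "(of_nat (pcount K K (2 * m)) :: bit) = of_nat (card (sets_of K m))"
proof -
  define S where "S = {(X,Y). X \<subseteq> K \<and> finite X \<and> Y \<subseteq> K \<and> finite Y \<and> \<Sum>X + \<Sum>Y = 2 * m}"
  have memS: "(X,Y) \<in> S \<longleftrightarrow> X \<subseteq> K \<and> finite X \<and> Y \<subseteq> K \<and> finite Y \<and> \<Sum>X + \<Sum>Y = 2 * m" for X Y
    by (simp add: S_def)
  have cl: "prod.swap p \<in> S" if "p \<in> S" for p
  proof -
    obtain X Y where pXY: "p = (X,Y)" by (cases p)
    then show ?thesis using that memS[of X Y] memS[of Y X] by auto
  qed
  have finS: "finite S" unfolding S_def by (rule finite_pcount_set)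
  have inv: "(of_nat (card S) :: bit) = of_nat (card {p\<in>S. prod.swap p = p})"
  proof (rule card_invol_bit[OF finS cl])
    fix p :: "nat set \<times> nat set"
    show "prod.swap (prod.swap p) = p" by (cases p) simp
  qed
  have fix_eq: "{p\<in>S. prod.swap p = p} = (\<lambda>X. (X,X)) ` sets_of K m"
  proof
    show "{p\<in>S. prod.swap p = p} \<subseteq> (\<lambda>X. (X,X)) ` sets_of K m"
    proof
      fix p assume p: "p \<in> {p\<in>S. prod.swap p = p}"
      obtain X Y where pXY: "p = (X,Y)" by (cases p)
      have p1: "p \<in> S" and p2: "prod.swap p = p" using p by (simp_all only: mem_Collect_eq)
      have sw: "prod.swap (X,Y) = (X,Y)" using p2 unfolding pXY .
      have inS: "(X,Y) \<in> S" using p1 unfolding pXY .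
      have "Y = X" using sw by (metis prod.inject swap_simp)
      have "(X,X) \<in> S" using inS unfolding \<open>Y = X\<close> .
      then have "X \<subseteq> K" "finite X" "\<Sum>X + \<Sum>X = 2 * m" unfolding memS by simp_all
      then have "X \<in> sets_of K m" unfolding sets_of_def by simp
      then show "p \<in> (\<lambda>X. (X,X)) ` sets_of K m" unfolding pXY \<open>Y = X\<close> by (rule imageI)
    qed
    show "(\<lambda>X. (X,X)) ` sets_of K m \<subseteq> {p\<in>S. prod.swap p = p}"
    proof
      fix p assume "p \<in> (\<lambda>X. (X,X)) ` sets_of K m"
      then obtain X where X: "X \<in> sets_of K m" "p = (X,X)" by blast
      then have "X \<subseteq> K" "finite X" "\<Sum>X = m" unfolding sets_of_def by simp_all
      then have "(X,X) \<in> S" unfolding memS by simp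
      then show "p \<in> {p\<in>S. prod.swap p = p}" using X(2) by simp
    qed
  qed
  have c2: "card ((\<lambda>X. (X,X)) ` sets_of K m) = card (sets_of K m)"
    by (rule card_image) (simp add: inj_on_def)
  have pc: "pcount K K (2 * m) = card S" unfolding pcount_def S_def ..
  show ?thesis unfolding pc inv fix_eq c2 ..
qed

lemma Km2: "Km 2 = {x. odd x}"
proof -
  have "x \<in> Km 2" if "odd x" for x
  proof -
    have "x = 2 * ((x + 1) div 2) - 1" "0 < (x + 1) div 2" using that by presburger+
    then show ?thesis unfolding Km_def by blast
  qed
  moreover have "odd x" if "x \<in> Km 2" for x using that by (auto simp: Km_def)
  ultimately show ?thesis by blast
qed

lemma Kp2: "Kp 2 = {x. odd x}"
proof -
  have "x \<in> Kp 2" if "odd x" for x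
  proof -
    have "x = 2 * (x div 2) + 1" using that by presburger
    then show ?thesis unfolding Kp_def by blast
  qed
  moreover have "odd x" if "x \<in> Kp 2" for x using that by (auto simp: Kp_def)
  ultimately show ?thesis by blast
qed

lemma Km4Kp4: "Km 4 \<union> Kp 4 = {x. odd x}" "Km 4 \<inter> Kp 4 = {}"
proof -
  have "x \<in> Km 4 \<union> Kp 4" if "odd x" for x
  proof (cases "x mod 4 = 3")
    case True
    then have "x = 4 * ((x + 1) div 4) - 1" "0 < (x + 1) div 4" by presburger+
    then show ?thesis unfolding Km_def by blast
  next
    case False
    then have "x = 4 * (x div 4) + 1" using that by presburger
    then show ?thesis unfolding Kp_def by blast
  qed
  moreover have "odd x" if "x \<in> Km 4 \<union> Kp 4" for x
  proof -
    have "x \<in> Km 4 \<Longrightarrow> odd x" by (auto simp: Km_def)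
    moreover have "x \<in> Kp 4 \<Longrightarrow> odd x" by (auto simp: Kp_def)
    ultimately show ?thesis using that by blast
  qed
  ultimately show "Km 4 \<union> Kp 4 = {x. odd x}" by blast
  show "Km 4 \<inter> Kp 4 = {}"
  proof (rule ccontr)
    assume "Km 4 \<inter> Kp 4 \<noteq> {}"
    then obtain u v where "0 < u" "4 * u - 1 = 4 * (v::nat) + 1" by (auto simp: Km_def Kp_def)
    then show False by presburger
  qed
qed

lemma R2: "gfD {x. odd x} = Zf"
proof (rule fps_ext)
  fix m
  have "gfD {x. odd x} $ m = of_nat (card (sets_of {x. odd x} m))" by (simp add: gfD_def)
  also have "\<dots> = of_nat (pcount {x. odd x} {x. odd x} (2 * m))" by (rule swap_pcount[symmetric])
  also have "\<dots> = of_nat (Na 2 (2 * m))" unfolding Na_pcount[OF order_refl] Km2 Kp2 ..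
  also have "\<dots> = (Th 2 * stretch 2 Zf) $ (2 * m)" by (rule Na_fps) simp
  also have "\<dots> = Zf $ m" by (simp add: Th2 stretch_def)
  finally show "gfD {x. odd x} $ m = Zf $ m" .
qed

lemma R3: "gfD {x. odd x} = Th 4 * stretch 4 Zf"
proof (rule fps_ext)
  fix n
  have "gfD {x. odd x} $ n = (gfD (Km 4) * gfD (Kp 4)) $ n"
    unfolding Km4Kp4(1)[symmetric] gfD_union[OF Km4Kp4(2)] ..
  also have "\<dots> = of_nat (pcount (Km 4) (Kp 4) n)" by (rule pcount_fps[symmetric])
  also have "\<dots> = of_nat (Na 4 n)" by (simp only: Na_pcount[of 4, simplified])
  also have "\<dots> = (Th 4 * stretch 4 Zf) $ n" by (rule Na_fps) simp
  finally show "gfD {x. odd x} $ n = (Th 4 * stretch 4 Zf) $ n" .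
qed

section \<open>Partitions with no part divisible by 4\<close>

lemma msum_ge: "x \<in># M \<Longrightarrow> x \<le> sum_mset (M :: nat multiset)"
proof -
  assume "x \<in># M"
  then have "M = add_mset x (M - {#x#})" by simp
  then have "sum_mset M = x + sum_mset (M - {#x#})" by (metis sum_mset.add_mset)
  then show ?thesis by simp
qed

lemma size_le_msum: "(\<forall>x\<in>#M. 0 < x) \<Longrightarrow> size M \<le> sum_mset (M :: nat multiset)"
proof (induction M)
  case empty then show ?case by simp
next
  case (add x M) then show ?case by simp
qed

lemma finite_msets_sum:
  "finite {M :: nat multiset. (\<forall>x\<in>#M. 0 < x \<and> Q x) \<and> sum_mset M = i}"
proof (rule finite_subset)
  show "{M :: nat multiset. (\<forall>x\<in>#M. 0 < x \<and> Q x) \<and> sum_mset M = i} \<subseteq> (\<Union>k\<in>{..i}. multisets_of_size {..i} k)"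
  proof
    fix M assume M: "M \<in> {M :: nat multiset. (\<forall>x\<in>#M. 0 < x \<and> Q x) \<and> sum_mset M = i}"
    then have "size M \<le> i" using size_le_msum[of M] by auto
    moreover have "set_mset M \<subseteq> {..i}" using M msum_ge by fastforce
    ultimately show "M \<in> (\<Union>k\<in>{..i}. multisets_of_size {..i} k)" by (auto simp: multisets_of_size_def)
  qed
qed auto

definition Knd :: "nat set" where "Knd = {x. 0 < x \<and> \<not> 4 dvd x}"

definition B4 :: "bit fps" where "B4 = Abs_fps (\<lambda>n. of_nat (b 4 n))"

definition tog :: "nat multiset \<times> nat set \<Rightarrow> nat multiset \<times> nat set" where
  "tog p = (let x = Max (set_mset (fst p) \<union> snd p) in
     if x \<in> snd p then (add_mset x (fst p), snd p - {x}) else (fst p - {#x#}, insert x (snd p)))"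

lemma tog_props:
  assumes fin: "finite S" and ne: "set_mset M \<union> S \<noteq> {}"
  shows "tog (tog (M,S)) = (M,S)" "tog (M,S) \<noteq> (M,S)"
    "set_mset (fst (tog (M,S))) \<union> snd (tog (M,S)) = set_mset M \<union> S"
    "finite (snd (tog (M,S)))"
    "sum_mset (fst (tog (M,S))) + \<Sum>(snd (tog (M,S))) = sum_mset M + \<Sum>S"
proof -
  define x where "x = Max (set_mset M \<union> S)"
  have finU: "finite (set_mset M \<union> S)" using fin by simp
  have xin: "x \<in> set_mset M \<union> S" unfolding x_def using Max_in[OF finU ne] .
  have "(set_mset (fst (tog (M,S))) \<union> snd (tog (M,S)) = set_mset M \<union> S) \<and> finite (snd (tog (M,S)))
       \<and> sum_mset (fst (tog (M,S))) + \<Sum>(snd (tog (M,S))) = sum_mset M + \<Sum>S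
       \<and> tog (M,S) \<noteq> (M,S) \<and> tog (tog (M,S)) = (M,S)"
  proof (cases "x \<in> S")
    case True
    have t: "tog (M,S) = (add_mset x M, S - {x})" unfolding tog_def fst_conv snd_conv Let_def x_def[symmetric] using True by simp
    have U: "set_mset (add_mset x M) \<union> (S - {x}) = set_mset M \<union> S" using True by auto
    have s: "sum_mset (add_mset x M) + \<Sum>(S - {x}) = sum_mset M + \<Sum>S"
      using True fin by (simp add: sum_diff1_nat) (metis add.commute le_add_diff_inverse member_le_sum sum_nonneg_leq_bound zero_le)
    have nx: "x \<notin> S - {x}" by simp
    have t2: "tog (add_mset x M, S - {x}) = (M, S)"
      unfolding tog_def fst_conv snd_conv Let_def U x_def[symmetric] using nx True
      by (simp add: insert_absorb)
    show ?thesis unfolding t using U s t2 fin True by auto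
  next
    case False
    then have xM: "x \<in># M" using xin by simp
    have t: "tog (M,S) = (M - {#x#}, insert x S)" unfolding tog_def fst_conv snd_conv Let_def x_def[symmetric] using False by simp
    have U: "set_mset (M - {#x#}) \<union> insert x S = set_mset M \<union> S"
    proof -
      have "set_mset M = insert x (set_mset (M - {#x#}))" using xM
        by (metis insert_DiffM set_mset_add_mset_insert)
      then show ?thesis by auto
    qed
    have s: "sum_mset (M - {#x#}) + \<Sum>(insert x S) = sum_mset M + \<Sum>S"
    proof -
      have "sum_mset M = x + sum_mset (M - {#x#})" using xM by (metis insert_DiffM sum_mset.add_mset)
      then show ?thesis using False fin by simp
    qed
    have t2: "tog (M - {#x#}, insert x S) = (M, S)"
      unfolding tog_def fst_conv snd_conv Let_def U x_def[symmetric] using False xM by simp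
    have ne2: "insert x S \<noteq> S" using False by auto
    show ?thesis unfolding t using U s t2 fin ne2 by auto
  qed
  then show "tog (tog (M,S)) = (M,S)" "tog (M,S) \<noteq> (M,S)"
    "set_mset (fst (tog (M,S))) \<union> snd (tog (M,S)) = set_mset M \<union> S"
    "finite (snd (tog (M,S)))"
    "sum_mset (fst (tog (M,S))) + \<Sum>(snd (tog (M,S))) = sum_mset M + \<Sum>S" by blast+
qed

lemma B4_Knd: "B4 * gfD Knd = 1"
proof (rule fps_ext)
  fix n
  define XM where "XM = {M :: nat multiset. set_mset M \<subseteq> Knd}"
  define XS where "XS = {S. S \<subseteq> Knd \<and> finite S}"
  define P where "P = {(M,S). M \<in> XM \<and> S \<in> XS \<and> sum_mset M + \<Sum>S = n}"
  have bset: "{M\<in>XM. sum_mset M = i} = {M :: nat multiset. (\<forall>x\<in>#M. 0 < x \<and> \<not> 4 dvd x) \<and> sum_mset M = i}" for i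
    unfolding XM_def Knd_def by auto
  have sset: "{S\<in>XS. \<Sum>S = i} = sets_of Knd i" for i
    unfolding XS_def sets_of_def by auto
  have cP: "card P = (\<Sum>i=0..n. card {M\<in>XM. sum_mset M = i} * card {S\<in>XS. \<Sum>S = n - i})"
    unfolding P_def
  proof (rule card_conv)
    show "finite {M\<in>XM. sum_mset M = i}" for i unfolding bset by (rule finite_msets_sum)
    show "finite {S\<in>XS. \<Sum>S = i}" for i unfolding sset by simp
  qed
  have lhs: "(B4 * gfD Knd) $ n = of_nat (card P)"
    unfolding cP bset sset B4_def gfD_def b_def conv_fps ..
  have finP: "finite P"
  proof (rule finite_subset)
    show "P \<subseteq> {M\<in>XM. sum_mset M \<le> n} \<times> {S\<in>XS. \<Sum>S \<le> n}" unfolding P_def by auto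
    have "{M\<in>XM. sum_mset M \<le> n} = (\<Union>i\<in>{..n}. {M\<in>XM. sum_mset M = i})" by auto
    moreover have "{S\<in>XS. \<Sum>S \<le> n} = (\<Union>i\<in>{..n}. {S\<in>XS. \<Sum>S = i})" by auto
    ultimately show "finite ({M\<in>XM. sum_mset M \<le> n} \<times> {S\<in>XS. \<Sum>S \<le> n})"
      unfolding bset sset using finite_msets_sum by simp
  qed
  show "(B4 * gfD Knd) $ n = 1 $ n"
  proof (cases "n = 0")
    case True
    have "P = {({#}, {})}"
    proof
      show "P \<subseteq> {({#}, {})}"
      proof
        fix p assume p: "p \<in> P"
        obtain M S where pMS: "p = (M,S)" by (cases p)
        have M: "set_mset M \<subseteq> Knd" and S: "S \<subseteq> Knd" "finite S" and s0: "sum_mset M + \<Sum>S = 0"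
          using p True unfolding pMS P_def XM_def XS_def by auto
        have "M = {#}"
        proof (rule ccontr)
          assume "M \<noteq> {#}"
          then obtain x where "x \<in># M" by (metis multiset_nonemptyE)
          then have "0 < x" "x \<le> sum_mset M" using M msum_ge unfolding Knd_def by auto
          then show False using s0 by simp
        qed
        moreover have "S = {}"
        proof (rule ccontr)
          assume "S \<noteq> {}"
          then obtain x where "x \<in> S" by blast
          then have "0 < x" "x \<le> \<Sum>S" using S member_le_sum[of x S "\<lambda>x. x"] unfolding Knd_def by auto
          then show False using s0 by simp
        qed
        ultimately show "p \<in> {({#}, {})}" using pMS by simp
      qed
      show "{({#}, {})} \<subseteq> P" using True unfolding P_def XM_def XS_def by simp
    qed
    then show ?thesis using lhs True by simp
  next
    case False
    have cl: "tog p \<in> P" if "p \<in> P" for p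
    proof -
      obtain M S where pMS: "p = (M,S)" by (cases p)
      have M: "set_mset M \<subseteq> Knd" and S: "S \<subseteq> Knd" "finite S" and sn: "sum_mset M + \<Sum>S = n"
        using that unfolding pMS P_def XM_def XS_def by auto
      have ne: "set_mset M \<union> S \<noteq> {}"
      proof
        assume "set_mset M \<union> S = {}"
        then have "M = {#}" "S = {}" by auto
        then show False using sn False by simp
      qed
      note tp = tog_props[OF S(2) ne]
      have "set_mset (fst (tog (M,S))) \<subseteq> Knd" "snd (tog (M,S)) \<subseteq> Knd" using tp(3) M S by blast+
      then show ?thesis using tp(4,5) sn unfolding pMS P_def XM_def XS_def
        by (cases "tog (M,S)") simp
    qed
    have inv: "tog (tog p) = p" and nf: "tog p \<noteq> p" if "p \<in> P" for p
    proof -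
      obtain M S where pMS: "p = (M,S)" by (cases p)
      have M: "set_mset M \<subseteq> Knd" and S: "S \<subseteq> Knd" "finite S" and sn: "sum_mset M + \<Sum>S = n"
        using that unfolding pMS P_def XM_def XS_def by auto
      have ne: "set_mset M \<union> S \<noteq> {}"
      proof
        assume "set_mset M \<union> S = {}"
        then have "M = {#}" "S = {}" by auto
        then show False using sn False by simp
      qed
      show "tog (tog p) = p" "tog p \<noteq> p" unfolding pMS using tog_props[OF S(2) ne] by auto
    qed
    have "(of_nat (card P) :: bit) = of_nat (card {p\<in>P. tog p = p})"
      by (rule card_invol_bit[OF finP cl inv])
    also have "{p\<in>P. tog p = p} = {}" using nf by auto
    finally show ?thesis using lhs False by simp
  qed
qed

definition phi :: "nat \<Rightarrow> int" where
  "phi k = (if even k then int k div 2 else - ((int k + 1) div 2))"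
definition phinv :: "int \<Rightarrow> nat" where
  "phinv c = (if 0 \<le> c then nat (2 * c) else nat (- 2 * c - 1))"

lemma phi_val: "int (k * (k + 1) div 2) = int 4 * tri (phi k) - phi k"
proof (cases "even k")
  case True
  then obtain j where k: "k = 2 * j" by blast
  have "k * (k + 1) div 2 = j * (2 * j + 1)" unfolding k by simp
  moreover have "phi k = int j" unfolding phi_def k by simp
  moreover have "2 * tri (int j) = int j * (int j + 1)" by (rule tri2)
  ultimately show ?thesis by (simp add: algebra_simps)
next
  case False
  then obtain j where k: "k = 2 * j + 1" using oddE by blast
  have e1: "k * (k + 1) div 2 = (2 * j + 1) * (j + 1)" unfolding k by (simp add: algebra_simps)
  have pk: "phi k = - (int j + 1)" unfolding phi_def k by simp
  have A: "int ((2 * j + 1) * (j + 1)) = 2 * (int j * (int j + 1)) + int j + 1" by (simp add: algebra_simps)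
  have "2 * tri (- (int j + 1)) = (- (int j + 1)) * (- (int j + 1) + 1)" by (rule tri2)
  then have B: "2 * tri (- (int j + 1)) = int j * (int j + 1)" by (simp add: algebra_simps)
  show ?thesis unfolding e1 pk using A B by simp
qed

lemma phi_inv1: "phinv (phi k) = k"
  unfolding phi_def phinv_def by (cases "even k") (auto elim!: evenE oddE)

lemma phi_inv2: "phi (phinv c) = c"
  unfolding phi_def phinv_def
  by (cases "0 \<le> c") (auto simp: even_nat_iff nat_mult_distrib)

lemma Th4_psi: "Th 4 = Abs_fps (\<lambda>n. of_nat (psi_coeff n))"
proof (rule fps_ext)
  fix i
  have "card {c::int. int 4 * tri c - c = int i} = card {k::nat. k * (k + 1) div 2 = i}"
  proof (rule bij_betw_same_card[symmetric], rule bij_betw_byWitness[where f'=phinv])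
    show "\<forall>a\<in>{k. k * (k + 1) div 2 = i}. phinv (phi a) = a" using phi_inv1 by simp
    show "\<forall>a'\<in>{c. int 4 * tri c - c = int i}. phi (phinv a') = a'" using phi_inv2 by simp
    show "phi ` {k. k * (k + 1) div 2 = i} \<subseteq> {c. int 4 * tri c - c = int i}"
      using phi_val by (auto simp del: of_nat_numeral)
    show "phinv ` {c. int 4 * tri c - c = int i} \<subseteq> {k. k * (k + 1) div 2 = i}"
    proof (rule image_subsetI)
      fix c assume "c \<in> {c. int 4 * tri c - c = int i}"
      then have "int 4 * tri (phi (phinv c)) - phi (phinv c) = int i" using phi_inv2 by simp
      then have "int (phinv c * (phinv c + 1) div 2) = int i" using phi_val by simp
      then show "phinv c \<in> {k. k * (k + 1) div 2 = i}" by simp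
    qed
  qed
  then show "Th 4 $ i = Abs_fps (\<lambda>n. of_nat (psi_coeff n)) $ i"
    unfolding Th_def psi_coeff_def by simp
qed

lemma gfD_zero: "0 \<notin> K \<Longrightarrow> gfD K $ 0 = 1"
proof -
  assume K0: "0 \<notin> K"
  have "sets_of K 0 = {{}}"
  proof
    show "sets_of K 0 \<subseteq> {{}}"
    proof
      fix S assume S: "S \<in> sets_of K 0"
      then have "S \<subseteq> {..0}" using sets_of_sub by blast
      moreover have "0 \<notin> S" using S K0 by (auto simp: sets_of_def)
      ultimately have "S = {}" by auto
      then show "S \<in> {{}}" by simp
    qed
  qed (auto simp: sets_of_def)
  then show ?thesis unfolding gfD_def by simp
qed

lemma split2: "{0<..} = {x::nat. odd x} \<union> (*) 2 ` {0<..}" "{x::nat. odd x} \<inter> (*) 2 ` {0<..} = {}"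
proof -
  show "{0<..} = {x::nat. odd x} \<union> (*) 2 ` {0<..}"
  proof
    show "{0<..} \<subseteq> {x::nat. odd x} \<union> (*) 2 ` {0<..}"
    proof
      fix x :: nat assume x: "x \<in> {0<..}"
      show "x \<in> {x::nat. odd x} \<union> (*) 2 ` {0<..}"
      proof (cases "odd x")
        case False
        then have "x = 2 * (x div 2)" "0 < x div 2" using x by auto
        then show ?thesis by blast
      qed simp
    qed
  qed (auto intro: odd_pos)
  show "{x::nat. odd x} \<inter> (*) 2 ` {0<..} = {}" by auto
qed

lemma split4: "{0<..} = Knd \<union> (*) 4 ` {0<..}" "Knd \<inter> (*) 4 ` {0<..} = {}"
proof -
  show "{0<..} = Knd \<union> (*) 4 ` {0<..}"
  proof
    show "{0<..} \<subseteq> Knd \<union> (*) 4 ` {0<..}"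
    proof
      fix x :: nat assume x: "x \<in> {0<..}"
      show "x \<in> Knd \<union> (*) 4 ` {0<..}"
      proof (cases "4 dvd x")
        case True
        then have "x = 4 * (x div 4)" "0 < x div 4" using x by auto
        then show ?thesis by blast
      next
        case False
        then show ?thesis using x by (simp add: Knd_def)
      qed
    qed
  qed (auto simp: Knd_def)
  show "Knd \<inter> (*) 4 ` {0<..} = {}" by (auto simp: Knd_def)
qed

lemma B4_psi: "B4 = Abs_fps (\<lambda>n. of_nat (psi_coeff n))"
proof -
  define D where "D = gfD {0<..}"
  define Od where "Od = gfD {x::nat. odd x}"
  define G where "G = gfD Knd"
  have D0: "D \<noteq> 0"
  proof
    assume "D = 0"
    then have "D $ 0 = 0" by simp
    moreover have "D $ 0 = 1" unfolding D_def by (rule gfD_zero) simp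
    ultimately show False by simp
  qed
  have e1: "D = Od * D ^ 2"
  proof -
    have "D = Od * gfD ((*) 2 ` {0<..})" unfolding D_def Od_def
      by (subst split2(1)) (rule gfD_union[OF split2(2)])
    also have "gfD ((*) 2 ` {0<..}) = D ^ 2" unfolding D_def by (simp add: gfD_image frob)
    finally show ?thesis .
  qed
  have e2: "D = G * D ^ 4"
  proof -
    have "D = G * gfD ((*) 4 ` {0<..})" unfolding D_def G_def
      by (subst split4(1)) (rule gfD_union[OF split4(2)])
    also have "gfD ((*) 4 ` {0<..}) = D ^ 4" unfolding D_def by (simp add: gfD_image frob4)
    finally show ?thesis .
  qed
  have e3: "B4 * G = 1" unfolding G_def by (rule B4_Knd)
  have e4: "Od = Th 4 * Od ^ 4"
  proof -
    have "Od = Th 4 * stretch 4 Zf" unfolding Od_def by (rule R3)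
    also have "Zf = Od" unfolding Od_def by (rule R2[symmetric])
    finally show ?thesis by (simp add: frob4)
  qed
  have OD: "Od * D = 1"
  proof -
    have "1 * D = (Od * D) * D" using e1 by (simp add: power2_eq_square algebra_simps)
    then show ?thesis using D0 by (metis mult_right_cancel)
  qed
  have T4: "Th 4 = D ^ 3"
  proof -
    have "Od * D ^ 4 = Th 4 * (Od * D) ^ 4" using e4 by (simp add: power_mult_distrib algebra_simps)
    also have "\<dots> = Th 4" using OD by simp
    finally have "Th 4 = Od * D ^ 4" by simp
    also have "\<dots> = (Od * D) * D ^ 3" by (simp add: power_numeral_reduce algebra_simps)
    finally show ?thesis using OD by simp
  qed
  have "B4 * D = B4 * G * D ^ 4" using e2 by (metis mult.assoc)
  also have "\<dots> = D ^ 4" using e3 by simp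
  also have "\<dots> = Th 4 * D" using T4 by (simp add: power_numeral_reduce algebra_simps)
  finally have "B4 * D = Th 4 * D" .
  then have "B4 = Th 4" using D0 by (metis mult_right_cancel)
  then show ?thesis using Th4_psi by simp
qed

lemma b4_mod2: "[b 4 n = psi_coeff n] (mod 2)"
proof -
  have "B4 $ n = Abs_fps (\<lambda>n. of_nat (psi_coeff n)) $ n" using B4_psi by simp
  then have "(of_nat (b 4 n) :: bit) = of_nat (psi_coeff n)" unfolding B4_def by simp
  then have "even (b 4 n) = even (psi_coeff n)" unfolding of_nat_bit by (auto split: if_splits)
  then show ?thesis unfolding cong_def by (auto simp: even_iff_mod_2_eq_zero odd_iff_mod_2_eq_one)
qed




section \<open>Number theory\<close>

definition sq :: "nat \<Rightarrow> bool" where "sq x \<longleftrightarrow> (\<exists>s. s ^ 2 = x)"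

lemma tri_nat2: "2 * (k * (k + 1) div 2) = k * (k + (1::nat))"
proof -
  have "even (k * (k + 1))" by simp
  then show ?thesis by simp
qed

lemma tri_inj: "k * (k + 1) div 2 = l * (l + 1) div 2 \<Longrightarrow> k = (l::nat)"
proof (rule ccontr)
  assume e: "k * (k + 1) div 2 = l * (l + 1) div 2" and ne: "k \<noteq> l"
  have e2: "k * (k + 1) = l * (l + 1)" using arg_cong[OF e, of "\<lambda>x. 2 * x"] tri_nat2[of k] tri_nat2[of l] by simp
  show False
  proof (cases "k < l")
    case True
    then have "k * (k + 1) < l * (l + 1)" by (intro mult_strict_mono) auto
    then show False using e2 by simp
  next
    case False
    then have "l < k" using ne by simp
    then have "l * (l + 1) < k * (k + 1)" by (intro mult_strict_mono) auto
    then show False using e2 by simp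
  qed
qed

lemma tri_sq: "(\<exists>k. k * (k + 1) div 2 = n) \<longleftrightarrow> sq (8 * n + 1)"
proof
  assume "\<exists>k. k * (k + 1) div 2 = n"
  then obtain k where k: "k * (k + 1) div 2 = n" by blast
  have "(2 * k + 1) ^ 2 = 4 * (k * (k + 1)) + 1" by (simp add: power2_eq_square algebra_simps)
  also have "k * (k + 1) = 2 * n"
  proof -
    have "2 * (k * (k + 1) div 2) = k * (k + 1)" by (rule tri_nat2)
    then show ?thesis unfolding k by simp
  qed
  finally show "sq (8 * n + 1)" unfolding sq_def by auto
next
  assume "sq (8 * n + 1)"
  then obtain s where s: "s ^ 2 = 8 * n + 1" unfolding sq_def by blast
  then have "odd (s ^ 2)" by simp
  then have "odd s" by simp
  then obtain k where k: "s = 2 * k + 1" using oddE by blast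
  have "(2 * k + 1) ^ 2 = 4 * (k * (k + 1)) + 1" by (simp add: power2_eq_square algebra_simps)
  then have "4 * (k * (k + 1)) = 8 * n" using s k by simp
  then have "k * (k + 1) = 2 * n" by simp
  then have "k * (k + 1) div 2 = n" by simp
  then show "\<exists>k. k * (k + 1) div 2 = n" by blast
qed

lemma psi_mod2: "psi_coeff n mod 2 = (if sq (8 * n + 1) then 1 else 0)"
proof (cases "sq (8 * n + 1)")
  case True
  then obtain k where k: "k * (k + 1) div 2 = n" using tri_sq by blast
  have "{k. k * (k + 1) div 2 = n} = {k}"
  proof (intro equalityI subsetI)
    fix x assume "x \<in> {k. k * (k + 1) div 2 = n}"
    then have "x * (x + 1) div 2 = k * (k + 1) div 2" using k by simp
    then have "x = k" by (rule tri_inj)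
    then show "x \<in> {k}" by simp
  qed (use k in simp)
  then show ?thesis using True unfolding psi_coeff_def by simp
next
  case False
  then have "{k. k * (k + 1) div 2 = n} = {}" using tri_sq by blast
  then show ?thesis using False unfolding psi_coeff_def by simp
qed

lemma b4_mod2': "b 4 m mod 2 = (if sq (8 * m + 1) then 1 else 0)"
  using b4_mod2[of m] psi_mod2[of m] unfolding cong_def by simp

lemma sq_cancel:
  assumes "0 < R" "sq (R ^ 2 * x)"
  shows "sq x"
proof -
  obtain s where s: "s ^ 2 = R ^ 2 * x" using assms(2) unfolding sq_def by blast
  then have "R ^ 2 dvd s ^ 2" by simp
  then have "R dvd s" by simp
  then obtain t where t: "s = R * t" by blast
  then have "R ^ 2 * t ^ 2 = R ^ 2 * x" using s by (simp add: power_mult_distrib)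
  then have "t ^ 2 = x" using assms(1) by simp
  then show ?thesis unfolding sq_def by blast
qed

lemma sq_mult_sq: "sq x \<Longrightarrow> sq (R ^ 2 * x)"
  unfolding sq_def by (metis power_mult_distrib)

lemma odd_sq_mod8: "odd (r::nat) \<Longrightarrow> r ^ 2 mod 8 = 1"
proof -
  assume "odd r"
  then obtain a where a: "r = 2 * a + 1" using oddE by blast
  have "even (a * (a + 1))" by simp
  then obtain c where c: "a * (a + 1) = 2 * c" by blast
  have "r ^ 2 = 4 * (a * (a + 1)) + 1" unfolding a by (simp add: power2_eq_square algebra_simps)
  also have "\<dots> = 8 * c + 1" using c by simp
  finally show ?thesis by simp
qed

lemma prod_list_sq: "(\<Prod>p\<leftarrow>ps. p ^ 2) = (prod_list ps :: nat) ^ 2"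
  by (induction ps) (simp_all add: power_mult_distrib)

lemma prod_list_odd: "(\<forall>p\<in>set ps. odd p) \<Longrightarrow> odd (prod_list (ps :: nat list))"
  by (induction ps) simp_all

lemma b4_cong_sq: "(sq (8 * m + 1) \<longleftrightarrow> sq (8 * n + 1)) \<Longrightarrow> [b 4 m = psi_coeff n] (mod 2)"
  unfolding cong_def using b4_mod2'[of m] psi_mod2[of n] by simp

lemma b4_cong_0: "\<not> sq (8 * m + 1) \<Longrightarrow> [b 4 m = 0] (mod 2)"
  unfolding cong_def using b4_mod2'[of m] by simp

lemma odd_sq_form: "odd (r::nat) \<Longrightarrow> \<exists>q. r ^ 2 = 8 * q + 1"
  using odd_sq_mod8[of r] by (metis div_mult_mod_eq add.commute mult.commute)

lemma part1_core:
  assumes "odd R"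
  shows "sq (8 * (R ^ 2 * n + (R ^ 2 - 1) div 8) + 1) \<longleftrightarrow> sq (8 * n + 1)"
proof -
  obtain q where q: "R ^ 2 = 8 * q + 1" using odd_sq_form[OF assms] by blast
  have "8 * (R ^ 2 * n + (R ^ 2 - 1) div 8) + 1 = R ^ 2 * (8 * n + 1)"
    unfolding q by (simp add: algebra_simps)
  moreover have "0 < R" using assms by (cases R) auto
  ultimately show ?thesis using sq_cancel sq_mult_sq by metis
qed

lemma part2_core:
  assumes p: "prime p" "odd p" and R: "odd R" and i: "1 \<le> i" "i \<le> p - 1"
  shows "\<not> sq (8 * (R ^ 2 * p ^ 2 * n + ((8 * i + p) * R ^ 2 * p - 1) div 8) + 1)"
proof
  assume H: "sq (8 * (R ^ 2 * p ^ 2 * n + ((8 * i + p) * R ^ 2 * p - 1) div 8) + 1)"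
  have "odd (R * p)" using R p by simp
  then obtain w where w: "(R * p) ^ 2 = 8 * w + 1" using odd_sq_form by blast
  have e1: "(8 * i + p) * R ^ 2 * p = 8 * (i * R ^ 2 * p + w) + 1"
  proof -
    have "(8 * i + p) * R ^ 2 * p = 8 * (i * R ^ 2 * p) + (R * p) ^ 2" by (simp add: algebra_simps power2_eq_square)
    then show ?thesis unfolding w by simp
  qed
  define X where "X = 8 * p * n + 8 * i + p"
  have e2: "8 * (R ^ 2 * p ^ 2 * n + ((8 * i + p) * R ^ 2 * p - 1) div 8) + 1 = R ^ 2 * (p * X)"
  proof -
    have "8 * (R ^ 2 * p ^ 2 * n + ((8 * i + p) * R ^ 2 * p - 1) div 8) + 1
        = 8 * (R ^ 2 * p ^ 2 * n) + 8 * (i * R ^ 2 * p) + (8 * w + 1)" unfolding e1 by simp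
    also have "\<dots> = 8 * (R ^ 2 * p ^ 2 * n) + 8 * (i * R ^ 2 * p) + (R * p) ^ 2" unfolding w ..
    also have "\<dots> = R ^ 2 * (p * X)" unfolding X_def by (simp add: algebra_simps power2_eq_square)
    finally show ?thesis .
  qed
  have "0 < R" using R by (cases R) auto
  then have "sq (p * X)" using sq_cancel H e2 by metis
  then obtain t where t: "t ^ 2 = p * X" unfolding sq_def by blast
  then have "p dvd t ^ 2" by simp
  then have "p dvd t" using p(1) prime_dvd_power by blast
  then obtain u where u: "t = p * u" by blast
  then have "p * (p * u ^ 2) = p * X" using t by (simp add: power2_eq_square algebra_simps)
  then have "X = p * u ^ 2" using p(1) by (simp add: prime_gt_0_nat)
  then have "p dvd X" by simp
  moreover have Xe: "X = p * (8 * n + 1) + 8 * i" unfolding X_def by (simp add: algebra_simps)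
  ultimately have "p dvd 8 * i" by (simp add: dvd_add_right_iff)
  then have "p dvd 8 \<or> p dvd i" using p(1) prime_dvd_mult_nat by blast
  moreover have "\<not> p dvd 8"
  proof
    assume "p dvd 8"
    then have "p dvd 2 ^ 3" by simp
    then have "p dvd 2" using p(1) prime_dvd_power by blast
    then have "p \<le> 2" by (rule dvd_imp_le) simp
    then have "p = 2" using prime_ge_2_nat[OF p(1)] by simp
    then show False using p(2) by simp
  qed
  moreover have "\<not> p dvd i"
  proof
    assume "p dvd i"
    then have "p \<le> i" using i by (intro dvd_imp_le) auto
    then show False using i p(1) prime_gt_0_nat[of p] by linarith
  qed
  ultimately show False by blast
qed

lemma part3_core:
  assumes p: "prime p" and R: "odd R" and L: "Legendre (int (8 * j + 1)) (int p) = -1"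
  shows "\<not> sq (8 * (R ^ 2 * p * n + ((8 * j + 1) * R ^ 2 - 1) div 8) + 1)"
proof
  assume H: "sq (8 * (R ^ 2 * p * n + ((8 * j + 1) * R ^ 2 - 1) div 8) + 1)"
  obtain q where q: "R ^ 2 = 8 * q + 1" using odd_sq_form[OF R] by blast
  have e2: "8 * (R ^ 2 * p * n + ((8 * j + 1) * R ^ 2 - 1) div 8) + 1 = R ^ 2 * (8 * p * n + 8 * j + 1)"
    unfolding q by (simp add: algebra_simps)
  have "0 < R" using R by (cases R) auto
  then have "sq (8 * p * n + 8 * j + 1)" using sq_cancel H e2 by metis
  then obtain t where t: "t ^ 2 = 8 * p * n + 8 * j + 1" unfolding sq_def by blast
  have "[int t ^ 2 = int (8 * j + 1)] (mod int p)"
  proof -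
    have "int t ^ 2 = int (8 * j + 1) + int p * int (8 * n)" using arg_cong[OF t, of int] by simp
    then show ?thesis unfolding cong_def by simp
  qed
  then have QR: "QuadRes (int p) (int (8 * j + 1))" unfolding QuadRes_def by blast
  show False using L QR unfolding Legendre_def by (auto split: if_splits)
qed

lemma prod_split_last:
  assumes "ps \<noteq> []"
  shows "(\<Prod>p\<leftarrow>ps. p ^ 2) = (\<Prod>p\<leftarrow>butlast ps. p ^ 2) * (last ps :: nat) ^ 2"
proof -
  have "ps = butlast ps @ [last ps]" using assms by simp
  then have "(\<Prod>p\<leftarrow>ps. p ^ 2) = (\<Prod>p\<leftarrow>butlast ps @ [last ps]. p ^ 2)" by simp
  also have "\<dots> = (\<Prod>p\<leftarrow>butlast ps. p ^ 2) * last ps ^ 2" by simp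
  finally show ?thesis .
qed

theorem theorem3p12:
  shows
  "(\<forall>ps :: nat list. (\<forall>p\<in>set ps. prime p \<and> odd p) \<longrightarrow>
      (\<forall>n. let P = (\<Prod>p\<leftarrow>ps. p^2) in
         [b 4 (P * n + (P - 1) div 8) = psi_coeff n] (mod 2)))
   \<and>
   (\<forall>ps :: nat list. ps \<noteq> [] \<longrightarrow> (\<forall>p\<in>set ps. prime p \<and> odd p) \<longrightarrow>
      (\<forall>n i. let P = (\<Prod>p\<leftarrow>ps. p^2); Q = (\<Prod>p\<leftarrow>butlast ps. p^2); pr = last ps in
         1 \<le> i \<longrightarrow> i \<le> pr - 1 \<longrightarrow>
         [b 4 (P * n + ((8 * i + pr) * Q * pr - 1) div 8) = 0] (mod 2)))
   \<and>
   (\<forall>ps :: nat list. ps \<noteq> [] \<longrightarrow> (\<forall>p\<in>set ps. prime p \<and> odd p) \<longrightarrow>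
      (\<forall>n j. let Q = (\<Prod>p\<leftarrow>butlast ps. p^2); pr = last ps in
         j \<le> pr - 1 \<longrightarrow> Legendre (int (8 * j + 1)) (int pr) = -1 \<longrightarrow>
         [b 4 (Q * pr * n + ((8 * j + 1) * Q - 1) div 8) = 0] (mod 2)))"
proof (intro conjI allI impI)
  fix ps :: "nat list" and n
  assume H: "\<forall>p\<in>set ps. prime p \<and> odd p"
  have oR: "odd (prod_list ps)" using H by (intro prod_list_odd) auto
  show "let P = (\<Prod>p\<leftarrow>ps. p^2) in [b 4 (P * n + (P - 1) div 8) = psi_coeff n] (mod 2)"
    unfolding Let_def prod_list_sq
    by (rule b4_cong_sq) (rule part1_core[OF oR])
next
  fix ps :: "nat list" and n i
  assume ne: "ps \<noteq> []" and H: "\<forall>p\<in>set ps. prime p \<and> odd p"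
  have oR: "odd (prod_list (butlast ps))" using H by (intro prod_list_odd) (auto dest: in_set_butlastD)
  have lp: "prime (last ps)" "odd (last ps)" using H ne by auto
  show "let P = (\<Prod>p\<leftarrow>ps. p^2); Q = (\<Prod>p\<leftarrow>butlast ps. p^2); pr = last ps in
         1 \<le> i \<longrightarrow> i \<le> pr - 1 \<longrightarrow>
         [b 4 (P * n + ((8 * i + pr) * Q * pr - 1) div 8) = 0] (mod 2)"
    unfolding Let_def prod_split_last[OF ne] unfolding prod_list_sq
    apply (intro impI)
    apply (rule b4_cong_0)
    apply (rule part2_core[OF lp oR])
    apply assumption+
    done
next
  fix ps :: "nat list" and n j
  assume ne: "ps \<noteq> []" and H: "\<forall>p\<in>set ps. prime p \<and> odd p"
  have oR: "odd (prod_list (butlast ps))" using H by (intro prod_list_odd) (auto dest: in_set_butlastD)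
  have lp: "prime (last ps)" using H ne by auto
  show "let Q = (\<Prod>p\<leftarrow>butlast ps. p^2); pr = last ps in
         j \<le> pr - 1 \<longrightarrow> Legendre (int (8 * j + 1)) (int pr) = -1 \<longrightarrow>
         [b 4 (Q * pr * n + ((8 * j + 1) * Q - 1) div 8) = 0] (mod 2)"
    unfolding Let_def prod_list_sq
    apply (intro impI)
    apply (rule b4_cong_0)
    apply (rule part3_core[OF lp oR])
    apply assumption
    done
qed


end
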